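(* Let $\gamma$ be a curve of finite total curvature in $\mathbb{E}^d$. Then there is a pair $(p,q)$ of (not necessarily distinct) points of $\gamma$ such that $\delta(\gamma)=\delta(p,q)$.
   Context: For distinct $p,q\in\gamma$, $\delta(p,q)=\mathrm{Len}(p,q)/|p-q|$ with $\mathrm{Len}(p,q)$ the (shorter) arclength distance along $\gamma$; the distortion is $\delta(\gamma)=\sup_{p\neq q}\delta(p,q)$. For a point $r\in\gamma$, $\delta(r,r):=\sec(\alpha(r)/2)$, where $\alpha(r)\in[0,\pi]$ is the turning angle at $r$, the angle between the one-sided unit tangent vectors $T_-(r)$ and $T_+(r)$ (which exist at every point of a finite total curvature curve), with $\alpha(r)=0$ at non-corner points; $\sec(\pi/2)=+\infty$. A curve has finite total curvature if the supremum over inscribed polygons of the sum of turning angles at interior vertices (angle in $[0,\pi]$ between $v_n-v_{n-1}$ and $v_{n+1}-v_n$) is finite. *)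

theory Defs
  imports "HOL-Analysis.Analysis"
begin

definition vec_angle :: "'a::euclidean_space \<Rightarrow> 'a \<Rightarrow> real" where
  "vec_angle u v = arccos ((u \<bullet> v) / (norm u * norm v))"

definition simple_closed_curve :: "(real \<Rightarrow> 'a::euclidean_space) \<Rightarrow> bool" where
  "simple_closed_curve g \<longleftrightarrow> continuous_on UNIV g \<and> (\<forall>t. g (t + 1) = g t) \<and> inj_on g {0..<1}"

definition curve_set :: "(real \<Rightarrow> 'a::euclidean_space) \<Rightarrow> 'a set" where
  "curve_set g = g ` {0..<1}"

definition finite_total_curvature :: "(real \<Rightarrow> 'a::euclidean_space) \<Rightarrow> bool" where
  "finite_total_curvature g \<longleftrightarrow> (\<exists>B. \<forall>(n::nat) (t::nat \<Rightarrow> real).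
     0 \<le> t 0 \<and> t n \<le> 1 \<and> (\<forall>i<n. t i < t (Suc i)) \<longrightarrow>
     (\<Sum>i\<in>{1..<n}. vec_angle (g (t i) - g (t (i - 1))) (g (t (Suc i)) - g (t i))) \<le> B)"

definition arc_len :: "(real \<Rightarrow> 'a::euclidean_space) \<Rightarrow> real \<Rightarrow> real \<Rightarrow> real" where
  "arc_len g a b = Sup {(\<Sum>i<n. dist (g (t i)) (g (t (Suc i)))) | (n::nat) (t::nat \<Rightarrow> real).
      t 0 = a \<and> t n = b \<and> (\<forall>i<n. t i \<le> t (Suc i))}"

definition param :: "(real \<Rightarrow> 'a::euclidean_space) \<Rightarrow> 'a \<Rightarrow> real" where
  "param g p = (THE s. s \<in> {0..<1} \<and> g s = p)"

definition Len :: "(real \<Rightarrow> 'a::euclidean_space) \<Rightarrow> 'a \<Rightarrow> 'a \<Rightarrow> real" where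
  "Len g p q = (let s = param g p; t = param g q in
     if s \<le> t then min (arc_len g s t) (arc_len g t (s + 1))
     else min (arc_len g t s) (arc_len g s (t + 1)))"

definition tangent_plus :: "(real \<Rightarrow> 'a::euclidean_space) \<Rightarrow> 'a \<Rightarrow> 'a" where
  "tangent_plus g r = (let s = param g r in
     Lim (at_right s) (\<lambda>t. (g t - g s) /\<^sub>R norm (g t - g s)))"

definition tangent_minus :: "(real \<Rightarrow> 'a::euclidean_space) \<Rightarrow> 'a \<Rightarrow> 'a" where
  "tangent_minus g r = (let s = param g r in
     Lim (at_left s) (\<lambda>t. (g s - g t) /\<^sub>R norm (g s - g t)))"

definition turning_angle :: "(real \<Rightarrow> 'a::euclidean_space) \<Rightarrow> 'a \<Rightarrow> real" where
  "turning_angle g r = vec_angle (tangent_minus g r) (tangent_plus g r)"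

definition delta :: "(real \<Rightarrow> 'a::euclidean_space) \<Rightarrow> 'a \<Rightarrow> 'a \<Rightarrow> ereal" where
  "delta g p q = (if p = q then
       (if turning_angle g p = pi then \<infinity> else ereal (1 / cos (turning_angle g p / 2)))
     else ereal (Len g p q / dist p q))"

definition distortion :: "(real \<Rightarrow> 'a::euclidean_space) \<Rightarrow> ereal" where
  "distortion g = (SUP (p, q) \<in> {(p, q). p \<in> curve_set g \<and> q \<in> curve_set g \<and> p \<noteq> q}. delta g p q)"

end

theory Submission
  imports Defs
begin
section \<open>Polygon length and turning on point lists\<close>

fun plen :: "'a::real_normed_vector list \<Rightarrow> real" where
  "plen (a # b # r) = dist a b + plen (b # r)"
| "plen _ = 0"

fun pturn :: "'a::euclidean_space list \<Rightarrow> real" where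
  "pturn (a # b # c # r) = vec_angle (b - a) (c - b) + pturn (b # c # r)"
| "pturn _ = 0"

lemma vec_angle_arg_bounds:
  fixes u v :: "'a::euclidean_space"
  shows "-1 \<le> (u \<bullet> v) / (norm u * norm v) \<and> (u \<bullet> v) / (norm u * norm v) \<le> 1"
proof (cases "u = 0 \<or> v = 0")
  case True then show ?thesis by auto
next
  case False
  then have p: "norm u * norm v > 0" by simp
  have "\<bar>u \<bullet> v\<bar> \<le> norm u * norm v" by (rule Cauchy_Schwarz_ineq2)
  then show ?thesis using p by (auto simp: divide_simps abs_le_iff)
qed

lemma vec_angle_nonneg: "0 \<le> vec_angle u v"
  unfolding vec_angle_def using vec_angle_arg_bounds[of u v] by (auto intro: arccos_lbound)

lemma vec_angle_le_pi: "vec_angle u v \<le> pi"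
  unfolding vec_angle_def using vec_angle_arg_bounds[of u v] by (auto intro: arccos_ubound)

lemma vec_angle_sym: "vec_angle u v = vec_angle v u"
  unfolding vec_angle_def by (simp add: inner_commute mult.commute)

lemma vec_angle_neg: "vec_angle (-u) (-v) = vec_angle u v"
  unfolding vec_angle_def by simp

lemma pturn_nonneg: "0 \<le> pturn ps"
  by (induction ps rule: pturn.induct) (auto intro: add_nonneg_nonneg vec_angle_nonneg)

lemma plen_nonneg: "0 \<le> plen ps"
  by (induction ps rule: plen.induct) auto

definition hang :: "'a::euclidean_space \<Rightarrow> 'a list \<Rightarrow> real" where
  "hang a zs = (if 2 \<le> length zs then vec_angle (zs!0 - a) (zs!1 - zs!0) else 0)"

lemma pturn_Cons: "pturn (a # zs) = hang a zs + pturn zs"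
  unfolding hang_def
  by (cases zs rule: pturn.cases) auto

lemma hang_nonneg: "0 \<le> hang a zs"
  unfolding hang_def by (auto intro: vec_angle_nonneg)

lemma hang_le_pi: "hang a zs \<le> pi"
  unfolding hang_def by (auto intro: vec_angle_le_pi)

lemma pturn_Cons_ge: "pturn zs \<le> pturn (a # zs)"
  using pturn_Cons[of a zs] hang_nonneg[of a zs] by linarith

lemma plen_Cons: "plen (a # zs) = (if zs = [] then 0 else dist a (hd zs)) + plen zs"
  by (cases zs) auto

lemma hang_take: "2 \<le> k \<Longrightarrow> hang a (take k zs) = hang a zs"
  unfolding hang_def by auto

lemma pturn_take_drop: "pturn xs = pturn (take (k+2) xs) + pturn (drop k xs)"
proof (induction k arbitrary: xs)
  case 0
  then show ?case by (cases xs rule: pturn.cases) auto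
next
  case (Suc k)
  show ?case
  proof (cases xs)
    case Nil then show ?thesis by simp
  next
    case (Cons a ys)
    have "take (Suc k + 2) xs = a # take (k+2) ys" using Cons by simp
    moreover have "pturn (a # take (k+2) ys) = hang a (take (k+2) ys) + pturn (take (k+2) ys)"
      by (rule pturn_Cons)
    ultimately have "pturn (take (Suc k + 2) xs) = hang a ys + pturn (take (k+2) ys)"
      using hang_take[of "k+2" a ys] by simp
    moreover have "pturn xs = hang a ys + pturn ys" using Cons pturn_Cons by simp
    moreover have "drop (Suc k) xs = drop k ys" using Cons by simp
    ultimately show ?thesis using Suc.IH[of ys] by simp
  qed
qed

lemma plen_take_drop: "plen xs = plen (take (k+1) xs) + plen (drop k xs)"
proof (induction k arbitrary: xs)
  case 0
  then show ?case by (cases xs rule: plen.cases) auto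
next
  case (Suc k)
  show ?case
  proof (cases xs)
    case Nil then show ?thesis by simp
  next
    case (Cons a ys)
    have "take (Suc k + 1) xs = a # take (k+1) ys" using Cons by simp
    moreover have "plen (a # take (k+1) ys) = (if ys = [] then 0 else dist a (hd ys)) + plen (take (k+1) ys)"
      using plen_Cons[of a "take (k+1) ys"] by (cases ys) auto
    moreover have "plen xs = (if ys = [] then 0 else dist a (hd ys)) + plen ys" using Cons by (cases ys) auto
    moreover have "drop (Suc k) xs = drop k ys" using Cons by simp
    ultimately show ?thesis using Suc.IH[of ys] by simp
  qed
qed

lemma pturn_append_ge: "pturn xs + pturn ys \<le> pturn (xs @ ys)"
proof (induction xs rule: pturn.induct)
  case (1 a b c r)
  then show ?case by simp
next
  case ("2_1") then show ?case by simp
next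
  case ("2_2" a)
  show ?case using pturn_Cons_ge[of ys a] by simp
next
  case ("2_3" a b)
  have "pturn ys \<le> pturn (b # ys)" by (rule pturn_Cons_ge)
  also have "\<dots> \<le> pturn (a # b # ys)" by (rule pturn_Cons_ge)
  finally show ?case by simp
qed

definition tang :: "'a::euclidean_space list \<Rightarrow> 'a \<Rightarrow> real" where
  "tang xs z = (if 2 \<le> length xs then vec_angle (last xs - last (butlast xs)) (z - last xs) else 0)"

lemma pturn_snoc: "pturn (xs @ [z]) = pturn xs + tang xs z"
proof (induction xs rule: pturn.induct)
  case (1 a b c r)
  have "pturn ((a # b # c # r) @ [z]) = vec_angle (b - a) (c - b) + pturn ((b # c # r) @ [z])" by simp
  also have "\<dots> = vec_angle (b - a) (c - b) + pturn (b # c # r) + tang (b # c # r) z"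
    using 1 by simp
  also have "tang (b # c # r) z = tang (a # b # c # r) z"
    unfolding tang_def by (cases r rule: rev_cases) (auto simp: butlast_append)
  finally show ?case by simp
next
  case "2_1" then show ?case by (simp add: tang_def)
next
  case ("2_2" a) then show ?case by (simp add: tang_def)
next
  case ("2_3" a b) then show ?case by (simp add: tang_def)
qed

lemma pturn_rev: "pturn (rev xs) = pturn xs"
proof (induction xs)
  case Nil then show ?case by simp
next
  case (Cons a xs)
  have "pturn (rev (a # xs)) = pturn (rev xs) + tang (rev xs) a"
    by (simp add: pturn_snoc)
  moreover have "tang (rev xs) a = hang a xs"
  proof (cases "2 \<le> length xs")
    case True
    then obtain x0 x1 r where xs: "xs = x0 # x1 # r"
      by (metis One_nat_def Suc_1 Suc_le_length_iff)
    have "rev xs = rev r @ [x1, x0]" using xs by simp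
    then have "last (rev xs) = x0" "last (butlast (rev xs)) = x1"
      by (simp_all add: butlast_append)
    then have "tang (rev xs) a = vec_angle (x0 - x1) (a - x0)" using True by (simp add: tang_def)
    also have "\<dots> = vec_angle (-(x1 - x0)) (-(x0 - a))" by simp
    also have "\<dots> = vec_angle (x0 - a) (x1 - x0)" by (simp only: vec_angle_neg vec_angle_sym)
    finally show ?thesis using xs by (simp add: hang_def)
  next
    case False then show ?thesis by (simp add: tang_def hang_def)
  qed
  ultimately show ?case using Cons pturn_Cons[of a xs] by simp
qed

lemma norm_tri3: "norm (x - z) \<le> norm (x - y) + norm (y - (z::'a::real_normed_vector))"
  using norm_triangle_ineq[of "x - y" "y - z"] by simp

lemma inner_sgn_self: "x \<bullet> sgn x = norm x"
  by (cases "x = 0") (simp_all add: sgn_div_norm inner_commute power2_norm_eq_inner[symmetric] power2_eq_square)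

lemma norm_sgn_le1: "norm (sgn x) \<le> 1"
  by (cases "x = 0") (simp_all add: norm_sgn)

lemma sgn_diff_le_angle:
  fixes u v :: "'a::euclidean_space"
  shows "norm (sgn u - sgn v) \<le> vec_angle u v"
proof (cases "u = 0 \<or> v = 0")
  case True
  have "norm (sgn u - sgn v) \<le> 1" using True by (auto simp: norm_sgn)
  also have "1 \<le> pi / 2" using pi_gt3 by simp
  also have "pi / 2 = vec_angle u v" using True by (auto simp: vec_angle_def)
  finally show ?thesis .
next
  case False
  define k where "k = (u \<bullet> v) / (norm u * norm v)"
  have kb: "-1 \<le> k" "k \<le> 1" using vec_angle_arg_bounds[of u v] by (auto simp: k_def)
  define a where "a = arccos k"
  have a0: "0 \<le> a" "a \<le> pi" using kb by (auto simp: a_def intro: arccos_lbound arccos_ubound)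
  have ca: "cos a = k" using kb by (simp add: a_def cos_arccos)
  have sk: "sgn u \<bullet> sgn v = k" using False by (simp add: sgn_div_norm k_def divide_simps mult.commute)
  have uu: "sgn u \<bullet> sgn u = 1" "sgn v \<bullet> sgn v = 1" using False
    by (simp_all add: norm_sgn flip: power2_norm_eq_inner)
  have "(norm (sgn u - sgn v))^2 = (sgn u - sgn v) \<bullet> (sgn u - sgn v)" by (simp add: power2_norm_eq_inner)
  also have "\<dots> = sgn u \<bullet> sgn u + sgn v \<bullet> sgn v - 2 * (sgn u \<bullet> sgn v)"
    by (simp add: inner_diff_left inner_diff_right inner_commute)
  also have "\<dots> = 2 - 2 * k" using uu sk by simp
  also have "\<dots> = 4 * (sin (a/2))^2"
  proof -
    have "cos a = 1 - 2 * (sin (a/2))^2" using cos_double_sin[of "a/2"] by simp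
    then show ?thesis using ca by simp
  qed
  also have "\<dots> \<le> a^2"
  proof -
    have "0 \<le> sin (a/2)" using a0 by (intro sin_ge_zero) auto
    moreover have "sin (a/2) \<le> a/2" using a0 by (intro sin_x_le_x) auto
    ultimately have "(sin (a/2))^2 \<le> (a/2)^2" by (intro power_mono) auto
    then show ?thesis by (simp add: power_divide)
  qed
  finally have "(norm (sgn u - sgn v))^2 \<le> a^2" .
  then have "norm (sgn u - sgn v) \<le> a" using a0 by (simp add: power2_le_iff_abs_le)
  then show ?thesis by (simp add: a_def k_def vec_angle_def)
qed

lemma sgn_approx:
  fixes w u :: "'a::real_normed_vector"
  assumes "lam > 0" "norm u = 1"
  shows "norm (sgn w - u) \<le> 2 * norm (w - lam *\<^sub>R u) / lam"
proof -
  have "norm (sgn w - u) \<le> norm (sgn w - w /\<^sub>R lam) + norm (w /\<^sub>R lam - u)"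
    by (rule norm_tri3)
  also have "norm (w /\<^sub>R lam - u) = norm (w - lam *\<^sub>R u) / lam"
  proof -
    have "w /\<^sub>R lam - u = inverse lam *\<^sub>R (w - lam *\<^sub>R u)" using assms by (simp add: scaleR_diff_right)
    then show ?thesis using assms by (simp add: divide_inverse_commute)
  qed
  also have "norm (sgn w - w /\<^sub>R lam) \<le> norm (w - lam *\<^sub>R u) / lam"
  proof (cases "w = 0")
    case True then show ?thesis using assms by simp
  next
    case False
    have "sgn w - w /\<^sub>R lam = (inverse (norm w) - inverse lam) *\<^sub>R w" by (simp add: sgn_div_norm scaleR_diff_left)
    then have "norm (sgn w - w /\<^sub>R lam) = \<bar>inverse (norm w) - inverse lam\<bar> * norm w" by simp
    also have "\<dots> = \<bar>lam - norm w\<bar> / lam" using False assms by (simp add: field_simps abs_div)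
    also have "\<bar>lam - norm w\<bar> \<le> norm (w - lam *\<^sub>R u)"
    proof -
      have "\<bar>norm (lam *\<^sub>R u) - norm w\<bar> \<le> norm (lam *\<^sub>R u - w)" by (rule norm_triangle_ineq3)
      then show ?thesis using assms by (simp add: norm_minus_commute)
    qed
    finally show ?thesis using assms by (simp add: divide_right_mono)
  qed
  finally show ?thesis by simp
qed

lemma sgn_sum_close:
  fixes e1 e2 :: "'a::real_normed_vector"
  assumes "e1 \<noteq> 0"
  shows "norm (sgn (e1 + e2) - sgn e1) \<le> 2 * norm (sgn e2 - sgn e1)"
proof -
  define lam where "lam = norm e1 + norm e2"
  have lp: "lam > 0" using assms by (simp add: lam_def add_pos_nonneg)
  have "e1 + e2 - lam *\<^sub>R sgn e1 = norm e2 *\<^sub>R (sgn e2 - sgn e1)"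
    using assms by (cases "e2 = 0") (simp_all add: lam_def sgn_div_norm algebra_simps)
  then have "norm (e1 + e2 - lam *\<^sub>R sgn e1) = norm e2 * norm (sgn e2 - sgn e1)" by simp
  moreover have "norm (sgn (e1 + e2) - sgn e1) \<le> 2 * (norm (e1 + e2 - lam *\<^sub>R sgn e1) / lam)"
    using sgn_approx[OF lp, of "sgn e1" "e1 + e2"] assms by (simp add: norm_sgn)
  moreover have "norm e2 * norm (sgn e2 - sgn e1) / lam \<le> norm (sgn e2 - sgn e1)"
  proof -
    have "norm e2 * norm (sgn e2 - sgn e1) \<le> lam * norm (sgn e2 - sgn e1)"
      by (intro mult_right_mono) (auto simp: lam_def)
    then show ?thesis using lp by (simp add: divide_simps mult.commute)
  qed
  ultimately show ?thesis by simp
qed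

section \<open>Straight polygons\<close>

lemma straight_aux:
  fixes a b :: "'a::euclidean_space"
  assumes "norm w \<le> 1" "norm (sgn (b - a) - w) + pturn (a # b # rest) \<le> th"
  shows "(1 - th) * plen (a # b # rest) \<le> (last (b # rest) - a) \<bullet> w"
  using assms(2)
proof (induction rest arbitrary: a b)
  case Nil
  have n: "norm (sgn (b - a) - w) \<le> th" using Nil by simp
  have "(b - a) \<bullet> w = (b - a) \<bullet> sgn (b - a) - (b - a) \<bullet> (sgn (b - a) - w)"
    by (simp add: inner_diff_right)
  also have "\<dots> \<ge> norm (b - a) - norm (b - a) * th"
  proof -
    have "(b - a) \<bullet> (sgn (b - a) - w) \<le> norm (b - a) * norm (sgn (b - a) - w)"
      by (rule norm_cauchy_schwarz)
    also have "\<dots> \<le> norm (b - a) * th" using n by (simp add: mult_left_mono)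
    finally show ?thesis by (simp add: inner_sgn_self)
  qed
  finally show ?case by (simp add: dist_norm norm_minus_commute algebra_simps)
next
  case (Cons c rest)
  have e: "pturn (a # b # c # rest) = vec_angle (b - a) (c - b) + pturn (b # c # rest)" by simp
  have "norm (sgn (c - b) - w) \<le> norm (sgn (c - b) - sgn (b - a)) + norm (sgn (b - a) - w)"
    by (rule norm_tri3)
  also have "norm (sgn (c - b) - sgn (b - a)) \<le> vec_angle (b - a) (c - b)"
    using sgn_diff_le_angle[of "b - a" "c - b"] by (simp add: norm_minus_commute)
  finally have "norm (sgn (c - b) - w) + pturn (b # c # rest) \<le> th"
    using Cons.prems e by simp
  from Cons.IH[OF this] have ih: "(1 - th) * plen (b # c # rest) \<le> (last (c # rest) - b) \<bullet> w" .
  have n: "norm (sgn (b - a) - w) \<le> th" using Cons.prems e pturn_nonneg[of "b # c # rest"]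
      vec_angle_nonneg[of "b - a" "c - b"] by linarith
  have "(b - a) \<bullet> w = (b - a) \<bullet> sgn (b - a) - (b - a) \<bullet> (sgn (b - a) - w)"
    by (simp add: inner_diff_right)
  also have "\<dots> \<ge> norm (b - a) - norm (b - a) * th"
  proof -
    have "(b - a) \<bullet> (sgn (b - a) - w) \<le> norm (b - a) * norm (sgn (b - a) - w)"
      by (rule norm_cauchy_schwarz)
    also have "\<dots> \<le> norm (b - a) * th" using n by (simp add: mult_left_mono)
    finally show ?thesis by (simp add: inner_sgn_self)
  qed
  finally have h1: "(1 - th) * dist a b \<le> (b - a) \<bullet> w"
    by (simp add: dist_norm norm_minus_commute algebra_simps)
  have "(1 - th) * plen (a # b # c # rest) = (1 - th) * dist a b + (1 - th) * plen (b # c # rest)"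
    by (simp add: algebra_simps)
  also have "\<dots> \<le> (b - a) \<bullet> w + (last (c # rest) - b) \<bullet> w" using h1 ih by linarith
  also have "\<dots> = (last (b # c # rest) - a) \<bullet> w" by (simp add: inner_diff_left)
  finally show ?case .
qed

lemma straight:
  fixes ps :: "'a::euclidean_space list"
  assumes "ps \<noteq> []" "pturn ps \<le> th"
  shows "(1 - th) * plen ps \<le> dist (hd ps) (last ps)"
proof (cases ps rule: plen.cases)
  case (1 a b r)
  have "(1 - th) * plen (a # b # r) \<le> (last (b # r) - a) \<bullet> sgn (b - a)"
    by (rule straight_aux) (use assms 1 norm_sgn_le1 in auto)
  then have "(1 - th) * plen ps \<le> (last (b # r) - a) \<bullet> sgn (b - a)" using 1 by simp
  also have "\<dots> \<le> norm (last (b # r) - a) * norm (sgn (b - a))" by (rule norm_cauchy_schwarz)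
  also have "\<dots> \<le> norm (last (b # r) - a)" using norm_sgn_le1[of "b - a"]
    by (simp add: mult_left_le)
  finally show ?thesis using 1 by (simp add: dist_norm norm_minus_commute)
qed (use assms in auto)

lemma greedy:
  fixes ps :: "'a::euclidean_space list"
  assumes "0 \<le> Dm" "\<forall>x\<in>set ps. \<forall>y\<in>set ps. dist x y \<le> Dm"
  shows "plen ps \<le> 2 * Dm * (2 * pturn ps + 1)"
  using assms(2)
proof (induction "length ps" arbitrary: ps rule: less_induct)
  case less
  show ?case
  proof (cases "pturn ps \<le> 1/2")
    case True
    show ?thesis
    proof (cases "ps = []")
      case True then show ?thesis using assms(1) by simp
    next
      case False
      have "(1 - 1/2) * plen ps \<le> dist (hd ps) (last ps)" by (rule straight[OF False True])
      also have "\<dots> \<le> Dm" using less.prems False by auto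
      finally have "plen ps \<le> 2 * Dm" by simp
      also have "\<dots> \<le> 2 * Dm * (2 * pturn ps + 1)"
      proof -
        have "2 * Dm * 1 \<le> 2 * Dm * (2 * pturn ps + 1)"
          using assms(1) pturn_nonneg[of ps] by (intro mult_left_mono) auto
        then show ?thesis by simp
      qed
      finally show ?thesis .
    qed
  next
    case False
    define P where "P = (\<lambda>j. j \<le> length ps \<and> pturn (take j ps) \<le> 1/2)"
    define j where "j = (GREATEST j. P j)"
    have P2: "P 2"
    proof -
      have "pturn (take 2 ps) = 0" by (cases ps rule: pturn.cases) auto
      moreover have "2 \<le> length ps" proof (rule ccontr)
        assume "\<not> 2 \<le> length ps"
        then have "pturn ps = 0" by (cases ps rule: pturn.cases) auto
        then show False using False by simp
      qed
      ultimately show ?thesis by (simp add: P_def)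
    qed
    have bound: "\<forall>y. P y \<longrightarrow> y \<le> length ps" by (simp add: P_def)
    have Pj: "P j" unfolding j_def using GreatestI_nat[of P 2 "length ps"] P2 bound by blast
    have j2: "2 \<le> j" unfolding j_def using Greatest_le_nat[of P 2 "length ps"] P2 bound by blast
    have jl: "j < length ps"
    proof -
      have "j \<le> length ps" using Pj by (simp add: P_def)
      moreover have "j \<noteq> length ps" using Pj False by (auto simp: P_def)
      ultimately show ?thesis by simp
    qed
    have notP: "\<not> P (j + 1)"
    proof
      assume "P (j+1)"
      then have "j + 1 \<le> j" using Greatest_le_nat[of P "j+1" "length ps"] bound unfolding j_def by blast
      then show False by simp
    qed
    then have t1: "pturn (take (j+1) ps) > 1/2" using jl by (auto simp: P_def)
    have tj: "pturn (take j ps) \<le> 1/2" using Pj by (simp add: P_def)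
    define R where "R = drop (j - 1) ps"
    have eqt: "pturn ps = pturn (take (j+1) ps) + pturn R"
      using pturn_take_drop[of ps "j - 1"] j2 by (simp add: R_def)
    have eql: "plen ps = plen (take j ps) + plen R"
      using plen_take_drop[of ps "j - 1"] j2 by (simp add: R_def)
    have lenR: "length R < length ps" using j2 jl by (simp add: R_def)
    have "\<forall>x\<in>set R. \<forall>y\<in>set R. dist x y \<le> Dm"
      using less.prems by (auto simp: R_def dest: in_set_dropD)
    then have ihR: "plen R \<le> 2 * Dm * (2 * pturn R + 1)" using less.hyps[OF lenR] by simp
    have "take j ps \<noteq> []" using j2 jl by auto
    then have "(1 - 1/2) * plen (take j ps) \<le> dist (hd (take j ps)) (last (take j ps))"
      using straight tj by blast
    also have "\<dots> \<le> Dm" using less.prems \<open>take j ps \<noteq> []\<close>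
      by (meson hd_in_set in_set_takeD last_in_set)
    finally have "plen (take j ps) \<le> 2 * Dm" by simp
    moreover have "2 * Dm * (2 * pturn R + 1) \<le> 2 * Dm * (2 * pturn ps)"
      using eqt t1 assms(1) by (intro mult_left_mono) auto
    ultimately show ?thesis using eql ihR by (simp add: algebra_simps)
  qed
qed

lemma plen_snoc: "xs \<noteq> [] \<Longrightarrow> plen (xs @ [z]) = plen xs + dist (last xs) z"
  by (induction xs rule: plen.induct) auto

lemma plen_append:
  "plen (xs @ ys) = plen xs + plen ys + (if xs \<noteq> [] \<and> ys \<noteq> [] then dist (last xs) (hd ys) else 0)"
  by (induction xs rule: plen.induct) (auto simp: plen_Cons)

lemma plen_insert: "plen (xs @ ys) \<le> plen (xs @ [z]) + plen (z # ys)"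
proof -
  have "dist (last xs) (hd ys) \<le> dist (last xs) z + dist z (hd ys)" by (rule dist_triangle)
  then show ?thesis by (auto simp: plen_append plen_Cons plen_nonneg)
qed

lemma plen_map_nth:
  "plen (map f (map t [0..<Suc n])) = (\<Sum>i<n. dist (f (t i)) (f (t (Suc i))))"
proof (induction n)
  case 0 then show ?case by simp
next
  case (Suc n)
  have "map f (map t [0..<Suc (Suc n)]) = map f (map t [0..<Suc n]) @ [f (t (Suc n))]" by simp
  then have "plen (map f (map t [0..<Suc (Suc n)])) = plen (map f (map t [0..<Suc n])) + dist (f (t n)) (f (t (Suc n)))"
    using plen_snoc[of "map f (map t [0..<Suc n])" "f (t (Suc n))"] by (simp add: last_map)
  then show ?case using Suc by simp
qed

lemma pturn_sum:
  "pturn ps = (\<Sum>i\<in>{1..<length ps - 1}. vec_angle (ps!i - ps!(i-1)) (ps!(Suc i) - ps!i))"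
proof (induction ps rule: pturn.induct)
  case (1 a b c r)
  define f where "f = (\<lambda>i. vec_angle ((a#b#c#r)!i - (a#b#c#r)!(i-1)) ((a#b#c#r)!(Suc i) - (a#b#c#r)!i))"
  have "(\<Sum>i\<in>{1..<length (a#b#c#r) - 1}. f i) = (\<Sum>i\<in>{1..<Suc (Suc (length r))}. f i)" by simp
  also have "\<dots> = f 1 + (\<Sum>i\<in>{Suc 1..<Suc (Suc (length r))}. f i)"
    by (rule sum.atLeast_Suc_lessThan) simp
  also have "(\<Sum>i\<in>{Suc 1..<Suc (Suc (length r))}. f i) = (\<Sum>i\<in>{1..<Suc (length r)}. f (Suc i))"
    by (rule sum.shift_bounds_Suc_ivl)
  also have "\<dots> = (\<Sum>i\<in>{1..<length (b#c#r) - 1}. vec_angle ((b#c#r)!i - (b#c#r)!(i-1)) ((b#c#r)!(Suc i) - (b#c#r)!i))"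
    by (intro sum.cong) (auto simp: f_def nth_Cons split: nat.split)
  finally show ?case using 1 by (simp add: f_def)
qed auto

lemma sorted_strict_remdups_adj: "sorted xs \<Longrightarrow> sorted_wrt (<) (remdups_adj xs)"
proof (induction xs rule: remdups_adj.induct)
  case (3 x y xs)
  show ?case
  proof (cases "x = y")
    case True then show ?thesis using 3 by simp
  next
    case False
    have "sorted (y # xs)" using 3 by simp
    then have ih: "sorted_wrt (<) (remdups_adj (y # xs))" using 3 False by simp
    have "\<forall>z\<in>set (y # xs). x < z" using 3 False by auto
    then show ?thesis using ih False by simp
  qed
qed auto

lemma plen_remdups_adj: "plen (map f (remdups_adj xs)) = plen (map f xs)"
proof (induction xs rule: remdups_adj.induct)
  case (3 x y xs)
  show ?case
  proof (cases "x = y")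
    case True then show ?thesis using 3 by simp
  next
    case False
    have "remdups_adj (y # xs) \<noteq> []" by simp
    then have "plen (map f (x # remdups_adj (y # xs))) = dist (f x) (f y) + plen (map f (remdups_adj (y # xs)))"
      using hd_remdups_adj[of "y # xs"] by (cases "remdups_adj (y # xs)") auto
    then show ?thesis using 3 False by simp
  qed
qed auto

lemma plen_const: "\<forall>x\<in>set ps. x = p \<Longrightarrow> plen ps = 0"
  by (induction ps rule: plen.induct) auto

lemma sorted_dropWhile_gt:
  fixes xs :: "real list"
  assumes "sorted xs" "x \<in> set (dropWhile (\<lambda>y. y \<le> c) xs)"
  shows "c < x"
proof -
  have ne: "dropWhile (\<lambda>y. y \<le> c) xs \<noteq> []" using assms(2) by (metis empty_iff empty_set)
  then obtain y ys where e: "dropWhile (\<lambda>y. y \<le> c) xs = y # ys" by (cases "dropWhile (\<lambda>y. y \<le> c) xs") auto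
  have "\<not> y \<le> c" using hd_dropWhile[OF ne] e by simp
  moreover have "sorted (y # ys)" using sorted_dropWhile[OF assms(1), of "\<lambda>y. y \<le> c"] e by simp
  ultimately show ?thesis using assms(2) e by auto
qed

locale sccurve =
  fixes g :: "real \<Rightarrow> 'a::euclidean_space"
  assumes scc: "simple_closed_curve g"
    and ftc: "finite_total_curvature g"
begin

lemma cont: "continuous_on UNIV g" using scc by (simp add: simple_closed_curve_def)

lemma isCont_g: "isCont g x" using cont by (simp add: continuous_on_eq_continuous_at)

lemma per1: "g (x + 1) = g x" using scc by (simp add: simple_closed_curve_def)

lemma inj01: "inj_on g {0..<1}" using scc by (simp add: simple_closed_curve_def)

lemma per_nat: "g (x + real n) = g x"
proof (induction n)
  case 0 show ?case by simp
next
  case (Suc n)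
  have e: "x + real (Suc n) = (x + real n) + 1" by simp
  show ?case unfolding e per1 by (rule Suc.IH)
qed

lemma per_int: "g (x + real_of_int k) = g x"
proof (cases "k \<ge> 0")
  case True
  then have "x + real_of_int k = x + real (nat k)" by simp
  then show ?thesis using per_nat[of x "nat k"] by metis
next
  case False
  then have e: "x = (x + real_of_int k) + real (nat (-k))" by simp
  show ?thesis using per_nat[of "x + real_of_int k" "nat (-k)"] e by metis
qed

lemma per_int': "g (x - real_of_int k) = g x"
  using per_int[of x "-k"] by simp

lemma param_g: "param g (g x) = x - floor x"
  unfolding param_def
proof (rule the_equality)
  show "x - floor x \<in> {0..<1} \<and> g (x - floor x) = g x"
    using per_int'[of x "floor x"] frac_ge_0[of x] frac_lt_1[of x] by (simp add: frac_def)
next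
  fix s assume s: "s \<in> {0..<1} \<and> g s = g x"
  have "x - floor x \<in> {0..<1}" using frac_ge_0[of x] frac_lt_1[of x] by (simp add: frac_def)
  moreover have "g (x - floor x) = g s" using s per_int'[of x "floor x"] by simp
  ultimately have "g s = g (x - floor x)" "s \<in> {0..<1}" "x - floor x \<in> {0..<1}" using s by auto
  then show "s = x - floor x" using inj_onD[OF inj01] by blast
qed

lemma g_eq_imp: "g x = g y \<Longrightarrow> x - floor x = y - floor y"
  using param_g[of x] param_g[of y] by simp

lemma g_inj_lt: "x < y \<Longrightarrow> y < x + 1 \<Longrightarrow> g x \<noteq> g y"
proof
  assume a: "x < y" "y < x + 1" "g x = g y"
  then have "x - floor x = y - floor y" using g_eq_imp a(3) by blast
  then have "y - x = real_of_int (floor y - floor x)" by (simp add: algebra_simps)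
  moreover have "0 < y - x" "y - x < 1" using a by auto
  ultimately have "0 < real_of_int (floor y - floor x)" "real_of_int (floor y - floor x) < 1" by linarith+
  then have "0 < floor y - floor x" "floor y - floor x < 1" by linarith+
  then show False by linarith
qed

lemma g_inj_ne: "x \<noteq> y \<Longrightarrow> \<bar>x - y\<bar> < 1 \<Longrightarrow> g x \<noteq> g y"
proof (cases "x < y")
  case True
  assume "\<bar>x - y\<bar> < 1" then have "y < x + 1" by linarith
  then show ?thesis using g_inj_lt[of x y] True by blast
next
  case False
  assume "x \<noteq> y" "\<bar>x - y\<bar> < 1" then have "y < x" "x < y + 1" using False by linarith+
  then show ?thesis using g_inj_lt[of y x] by metis
qed

lemma curve_set_range: "curve_set g = range g"
proof
  show "range g \<subseteq> curve_set g"
  proof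
    fix p assume "p \<in> range g"
    then obtain x where "p = g x" by auto
    moreover have "x - floor x \<in> {0..<1}" using frac_ge_0[of x] frac_lt_1[of x] by (simp add: frac_def)
    moreover have "g (x - floor x) = g x" by (rule per_int')
    ultimately show "p \<in> curve_set g" unfolding curve_set_def by (metis image_eqI)
  qed
qed (auto simp: curve_set_def)

lemma curve_set_01: "curve_set g = g ` {0..1}"
proof
  show "curve_set g \<subseteq> g ` {0..1}" by (auto simp: curve_set_def)
  show "g ` {0..1} \<subseteq> curve_set g" using curve_set_range by auto
qed

lemma compact_curve: "compact (curve_set g)"
  unfolding curve_set_01 by (intro compact_continuous_image continuous_on_subset[OF cont]) auto

lemma bounded_g: "\<exists>M. \<forall>x. norm (g x) \<le> M"
proof -
  have "bounded (curve_set g)" using compact_curve by (rule compact_imp_bounded)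
  then obtain M where "\<forall>p\<in>curve_set g. norm p \<le> M" by (auto simp: bounded_iff)
  then show ?thesis using curve_set_range by auto
qed

definition Dm :: real where "Dm = 2 * (SOME M. \<forall>x. norm (g x) \<le> M)"

lemma dist_Dm: "dist (g x) (g y) \<le> Dm"
proof -
  define M where "M = (SOME M. \<forall>x. norm (g x) \<le> M)"
  have M: "\<forall>x. norm (g x) \<le> M" unfolding M_def using bounded_g by (rule someI_ex)
  have "dist (g x) (g y) \<le> norm (g x) + norm (g y)" by (simp add: dist_norm norm_triangle_ineq4)
  also have "\<dots> \<le> 2 * M" using M[rule_format, of x] M[rule_format, of y] by simp
  finally show ?thesis by (simp add: Dm_def M_def)
qed

lemma Dm_nonneg: "0 \<le> Dm" using dist_Dm[of 0 0] by simp

definition Bt :: real where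
  "Bt = (SOME B. \<forall>xs. sorted_wrt (<) xs \<and> set xs \<subseteq> {0..1} \<longrightarrow> pturn (map g xs) \<le> B)"

lemma ftc_list: "\<exists>B. \<forall>xs. sorted_wrt (<) xs \<and> set xs \<subseteq> {0..1} \<longrightarrow> pturn (map g xs) \<le> B"
proof -
  obtain B where B: "\<forall>(n::nat) (t::nat \<Rightarrow> real).
     0 \<le> t 0 \<and> t n \<le> 1 \<and> (\<forall>i<n. t i < t (Suc i)) \<longrightarrow>
     (\<Sum>i\<in>{1..<n}. vec_angle (g (t i) - g (t (i - 1))) (g (t (Suc i)) - g (t i))) \<le> B"
    using ftc unfolding finite_total_curvature_def by blast
  have "pturn (map g xs) \<le> B" if xs: "sorted_wrt (<) xs" "set xs \<subseteq> {0..1}" for xs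
  proof (cases "xs = []")
    case True
    have "0 \<le> B" using B[rule_format, where n=0 and t="\<lambda>_. 0"] by simp
    then show ?thesis using True by simp
  next
    case False
    define n where "n = length xs - 1"
    define t where "t = (\<lambda>i. xs ! i)"
    have "t 0 \<in> set xs" "t n \<in> set xs" using False by (auto simp: t_def n_def)
    then have "0 \<le> t 0" "t n \<le> 1" using xs(2) by auto
    moreover have "\<forall>i<n. t i < t (Suc i)" using xs by (auto simp: t_def n_def sorted_wrt_iff_nth_less)
    ultimately have "(\<Sum>i\<in>{1..<n}. vec_angle (g (t i) - g (t (i - 1))) (g (t (Suc i)) - g (t i))) \<le> B"
      using B by blast
    moreover have "pturn (map g xs) = (\<Sum>i\<in>{1..<n}. vec_angle (g (t i) - g (t (i - 1))) (g (t (Suc i)) - g (t i)))"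
      unfolding pturn_sum by (intro sum.cong) (auto simp: n_def t_def)
    ultimately show ?thesis by simp
  qed
  then show ?thesis by blast
qed

lemma Bt: "sorted_wrt (<) xs \<Longrightarrow> set xs \<subseteq> {0..1} \<Longrightarrow> pturn (map g xs) \<le> Bt"
  using someI_ex[OF ftc_list] unfolding Bt_def by blast

lemma Bt_nonneg: "0 \<le> Bt" using Bt[of "[]"] by simp

section \<open>Rectifiability\<close>

definition M0 :: real where "M0 = 2 * Dm * (2 * Bt + 1)"

lemma M0_nonneg: "0 \<le> M0" using Dm_nonneg Bt_nonneg by (simp add: M0_def)

lemma plen_strict01: "sorted_wrt (<) xs \<Longrightarrow> set xs \<subseteq> {0..1} \<Longrightarrow> plen (map g xs) \<le> M0"
proof -
  assume a: "sorted_wrt (<) xs" "set xs \<subseteq> {0..1}"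
  have "plen (map g xs) \<le> 2 * Dm * (2 * pturn (map g xs) + 1)"
    by (rule greedy) (auto simp: Dm_nonneg dist_Dm)
  also have "\<dots> \<le> 2 * Dm * (2 * Bt + 1)"
    using Bt[OF a] Dm_nonneg by (intro mult_left_mono) auto
  finally show ?thesis by (simp add: M0_def)
qed

lemma plen_sorted01: "sorted xs \<Longrightarrow> set xs \<subseteq> {0..1} \<Longrightarrow> plen (map g xs) \<le> M0"
proof -
  assume a: "sorted xs" "set xs \<subseteq> {0..1}"
  have "plen (map g (remdups_adj xs)) \<le> M0"
    by (rule plen_strict01) (use a sorted_strict_remdups_adj in auto)
  then show ?thesis by (simp only: plen_remdups_adj)
qed

lemma map_g_shift: "map g (map (\<lambda>x. x + real_of_int k) xs) = map g xs"
  by (simp add: per_int)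

lemma plen_sorted_k: "sorted xs \<Longrightarrow> set xs \<subseteq> {real_of_int k..real_of_int k + 1} \<Longrightarrow> plen (map g xs) \<le> M0"
proof -
  assume a: "sorted xs" "set xs \<subseteq> {real_of_int k..real_of_int k + 1}"
  define ys where "ys = map (\<lambda>x. x + real_of_int (-k)) xs"
  have "sorted ys" using a(1) by (simp add: ys_def sorted_iff_nth_mono)
  moreover have "set ys \<subseteq> {0..1}" using a(2) by (auto simp: ys_def)
  ultimately have "plen (map g ys) \<le> M0" by (rule plen_sorted01)
  moreover have "map g ys = map g xs" unfolding ys_def by (rule map_g_shift)
  ultimately show ?thesis by simp
qed

lemma plen_split:
  fixes xs :: "real list"
  shows "plen (map g xs) \<le> plen (map g (takeWhile (\<lambda>y. y \<le> c) xs @ [c])) + plen (map g (c # dropWhile (\<lambda>y. y \<le> c) xs))"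
proof -
  have "map g xs = map g (takeWhile (\<lambda>y. y \<le> c) xs) @ map g (dropWhile (\<lambda>y. y \<le> c) xs)"
    by (metis map_append takeWhile_dropWhile_id)
  then show ?thesis using plen_insert[of "map g (takeWhile (\<lambda>y. y \<le> c) xs)" "map g (dropWhile (\<lambda>y. y \<le> c) xs)" "g c"]
    by simp
qed

lemma sorted_A: "sorted xs \<Longrightarrow> sorted (takeWhile (\<lambda>y. y \<le> c) xs @ [c])"
  unfolding sorted_append using sorted_takeWhile[of xs] by (auto dest: set_takeWhileD)

lemma sorted_C: "sorted (xs::real list) \<Longrightarrow> sorted (c # dropWhile (\<lambda>y. y \<le> c) xs)"
proof -
  assume a: "sorted xs"
  have "\<forall>y\<in>set (dropWhile (\<lambda>y. y \<le> c) xs). c \<le> y"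
    using sorted_dropWhile_gt[OF a] less_imp_le by blast
  then show ?thesis using sorted_dropWhile[OF a] by simp
qed

lemma plen_sorted_n:
  "sorted xs \<Longrightarrow> set xs \<subseteq> {real_of_int k..real_of_int k + real (Suc n)} \<Longrightarrow> plen (map g xs) \<le> real (Suc n) * M0"
proof (induction n arbitrary: xs k)
  case 0 then show ?case using plen_sorted_k by simp
next
  case (Suc n)
  define c where "c = real_of_int (k + 1)"
  define A where "A = takeWhile (\<lambda>y. y \<le> c) xs @ [c]"
  define C where "C = c # dropWhile (\<lambda>y. y \<le> c) xs"
  have "sorted A" unfolding A_def by (rule sorted_A[OF Suc.prems(1)])
  moreover have "set A \<subseteq> {real_of_int k..real_of_int k + 1}"
  proof
    fix x assume "x \<in> set A"
    then have "x = c \<or> (x \<in> set xs \<and> x \<le> c)" unfolding A_def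
      by (auto dest: set_takeWhileD)
    then show "x \<in> {real_of_int k..real_of_int k + 1}" using Suc.prems(2) by (auto simp: c_def)
  qed
  ultimately have hA: "plen (map g A) \<le> M0" by (rule plen_sorted_k)
  have "sorted C" unfolding C_def by (rule sorted_C[OF Suc.prems(1)])
  moreover have "set C \<subseteq> {real_of_int (k+1)..real_of_int (k+1) + real (Suc n)}"
  proof
    fix x assume "x \<in> set C"
    then have "x = c \<or> (x \<in> set xs \<and> c < x)" unfolding C_def
      using sorted_dropWhile_gt[OF Suc.prems(1)] by (auto dest: set_dropWhileD)
    then show "x \<in> {real_of_int (k+1)..real_of_int (k+1) + real (Suc n)}" using Suc.prems(2) by (auto simp: c_def)
  qed
  ultimately have hC: "plen (map g C) \<le> real (Suc n) * M0" by (rule Suc.IH)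
  have "plen (map g xs) \<le> plen (map g A) + plen (map g C)" unfolding A_def C_def by (rule plen_split)
  also have "\<dots> \<le> M0 + real (Suc n) * M0" using hA hC by simp
  finally show ?case by (simp add: algebra_simps)
qed

definition AL :: "real \<Rightarrow> real \<Rightarrow> real set" where
  "AL a b = {plen (map g xs) | xs. xs \<noteq> [] \<and> hd xs = a \<and> last xs = b \<and> sorted xs}"

lemma sorted_hd_last_set: "sorted xs \<Longrightarrow> xs \<noteq> [] \<Longrightarrow> set xs \<subseteq> {hd xs..last xs}"
proof
  fix x assume a: "sorted xs" "xs \<noteq> []" "x \<in> set xs"
  then obtain i where i: "i < length xs" "x = xs ! i" by (auto simp: in_set_conv_nth)
  have "hd xs \<le> x" using a i by (simp add: hd_conv_nth sorted_nth_mono)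
  moreover have "x \<le> last xs" using a i by (simp add: last_conv_nth sorted_nth_mono)
  ultimately show "x \<in> {hd xs..last xs}" by simp
qed

lemma arc_len_AL: "arc_len g a b = Sup (AL a b)"
proof -
  have "{(\<Sum>i<n. dist (g (t i)) (g (t (Suc i)))) | (n::nat) (t::nat \<Rightarrow> real).
      t 0 = a \<and> t n = b \<and> (\<forall>i<n. t i \<le> t (Suc i))} = AL a b"
  proof (intro set_eqI iffI)
    fix y assume "y \<in> {(\<Sum>i<n. dist (g (t i)) (g (t (Suc i)))) | (n::nat) (t::nat \<Rightarrow> real).
      t 0 = a \<and> t n = b \<and> (\<forall>i<n. t i \<le> t (Suc i))}"
    then obtain n t where nt: "y = (\<Sum>i<n. dist (g (t i)) (g (t (Suc i))))" "t 0 = a" "t n = b"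
      "\<forall>i<n. t i \<le> t (Suc i)" by blast
    define xs where "xs = map t [0..<Suc n]"
    have "sorted xs" unfolding sorted_iff_nth_Suc using nt(4) by (simp add: xs_def del: upt_Suc)
    have len: "length xs = Suc n" by (simp add: xs_def)
    have nth: "xs ! i = t i" if "i \<le> n" for i using that by (simp add: xs_def del: upt_Suc)
    have "xs \<noteq> []" using len by auto
    moreover have "hd xs = a" using nth[of 0] nt(2) \<open>xs \<noteq> []\<close> by (simp add: hd_conv_nth)
    moreover have "last xs = b" using nth[of n] nt(3) \<open>xs \<noteq> []\<close> len by (simp add: last_conv_nth)
    moreover have "y = plen (map g xs)" by (simp only: xs_def plen_map_nth nt(1))
    ultimately show "y \<in> AL a b" using \<open>sorted xs\<close> by (auto simp: AL_def)
  next
    fix y assume "y \<in> AL a b"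
    then obtain xs where xs: "y = plen (map g xs)" "xs \<noteq> []" "hd xs = a" "last xs = b" "sorted xs"
      by (auto simp: AL_def)
    define n where "n = length xs - 1"
    define t where "t = (\<lambda>i. xs ! i)"
    have e: "map t [0..<Suc n] = xs" using xs(2) by (simp add: n_def t_def map_nth)
    have "t 0 = a" "t n = b" using xs by (auto simp: t_def n_def hd_conv_nth last_conv_nth)
    moreover have "\<forall>i<n. t i \<le> t (Suc i)" using xs(5) by (auto simp: t_def n_def sorted_iff_nth_Suc)
    moreover have "y = (\<Sum>i<n. dist (g (t i)) (g (t (Suc i))))"
      using plen_map_nth[of g t n] unfolding e xs(1) .
    ultimately show "y \<in> {(\<Sum>i<n. dist (g (t i)) (g (t (Suc i)))) | (n::nat) (t::nat \<Rightarrow> real).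
      t 0 = a \<and> t n = b \<and> (\<forall>i<n. t i \<le> t (Suc i))}" by blast
  qed
  then show ?thesis unfolding arc_len_def by simp
qed

lemma AL_bdd: "bdd_above (AL a b)"
proof -
  define k where "k = floor a"
  define n where "n = nat (ceiling (b - a))"
  have "plen (map g xs) \<le> real (Suc n) * M0" if xs: "xs \<noteq> []" "hd xs = a" "last xs = b" "sorted xs" for xs
  proof (rule plen_sorted_n)
    show "sorted xs" by fact
    have "set xs \<subseteq> {a..b}" using sorted_hd_last_set[OF xs(4,1)] xs by simp
    moreover have "real_of_int k \<le> a" by (simp add: k_def)
    moreover have "b \<le> real_of_int k + real (Suc n)"
    proof -
      have "b - a \<le> real n" unfolding n_def by linarith
      moreover have "a < real_of_int k + 1" unfolding k_def by linarith
      ultimately show ?thesis by simp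
    qed
    ultimately show "set xs \<subseteq> {real_of_int k..real_of_int k + real (Suc n)}" by auto
  qed
  then show ?thesis unfolding AL_def bdd_above_def by blast
qed

lemma AL_ne: "a \<le> b \<Longrightarrow> AL a b \<noteq> {}"
  unfolding AL_def by (rule ccontr) (auto dest: spec[of _ "[a, b]"])

lemma arc_ge: "xs \<noteq> [] \<Longrightarrow> hd xs = a \<Longrightarrow> last xs = b \<Longrightarrow> sorted xs \<Longrightarrow> plen (map g xs) \<le> arc_len g a b"
  unfolding arc_len_AL by (rule cSup_upper[OF _ AL_bdd]) (auto simp: AL_def)

lemma arc_le:
  assumes "a \<le> b" "\<And>xs. xs \<noteq> [] \<Longrightarrow> hd xs = a \<Longrightarrow> last xs = b \<Longrightarrow> sorted xs \<Longrightarrow> plen (map g xs) \<le> C"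
  shows "arc_len g a b \<le> C"
  unfolding arc_len_AL by (rule cSup_least[OF AL_ne[OF assms(1)]]) (use assms(2) in \<open>auto simp: AL_def\<close>)

lemma arc_ge_dist: "a \<le> b \<Longrightarrow> dist (g a) (g b) \<le> arc_len g a b"
  using arc_ge[of "[a, b]" a b] by simp

lemma arc_ge3: "a \<le> c \<Longrightarrow> c \<le> b \<Longrightarrow> dist (g a) (g c) + dist (g c) (g b) \<le> arc_len g a b"
  using arc_ge[of "[a, c, b]" a b] by simp

lemma arc_nonneg: "a \<le> b \<Longrightarrow> 0 \<le> arc_len g a b"
  using arc_ge_dist[of a b] zero_le_dist[of "g a" "g b"] by linarith

lemma arc_mono:
  assumes "a \<le> a'" "a' \<le> b'" "b' \<le> b"
  shows "arc_len g a' b' \<le> arc_len g a b"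
proof (rule arc_le)
  show "a' \<le> b'" by fact
  fix xs assume xs: "xs \<noteq> []" "hd xs = a'" "last xs = b'" "sorted xs"
  define ys where "ys = a # xs @ [b]"
  have "set xs \<subseteq> {a'..b'}" using sorted_hd_last_set[OF xs(4,1)] xs by simp
  then have "sorted ys" using xs(4) assms by (auto simp: ys_def sorted_append)
  moreover have "plen (map g xs) \<le> plen (map g ys)"
    using xs(1) by (simp add: ys_def plen_Cons plen_append plen_nonneg)
  moreover have "plen (map g ys) \<le> arc_len g a b" by (rule arc_ge) (use \<open>sorted ys\<close> in \<open>auto simp: ys_def\<close>)
  ultimately show "plen (map g xs) \<le> arc_len g a b" by simp
qed

lemma arc_split:
  assumes "a \<le> c" "c \<le> b"
  shows "arc_len g a b \<le> arc_len g a c + arc_len g c b"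
proof (rule arc_le)
  show "a \<le> b" using assms by simp
  fix xs assume xs: "xs \<noteq> []" "hd xs = a" "last xs = b" "sorted xs"
  define A where "A = takeWhile (\<lambda>y. y \<le> c) xs @ [c]"
  define C where "C = c # dropWhile (\<lambda>y. y \<le> c) xs"
  have "plen (map g xs) \<le> plen (map g A) + plen (map g C)" unfolding A_def C_def by (rule plen_split)
  moreover have "plen (map g A) \<le> arc_len g a c"
  proof (rule arc_ge)
    show "A \<noteq> []" "last A = c" by (simp_all add: A_def)
    obtain x xs' where "xs = x # xs'" using xs(1) by (cases xs) auto
    then show "hd A = a" using xs(2) assms by (auto simp: A_def)
    show "sorted A" unfolding A_def by (rule sorted_A[OF xs(4)])
  qed
  moreover have "plen (map g C) \<le> arc_len g c b"
  proof (rule arc_ge)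
    show "C \<noteq> []" "hd C = c" by (simp_all add: C_def)
    show "last C = b"
    proof (cases "dropWhile (\<lambda>y. y \<le> c) xs = []")
      case True
      then have "\<forall>y\<in>set xs. y \<le> c" by simp
      then have "b \<le> c" using xs by auto
      then show ?thesis using True assms by (simp add: C_def)
    next
      case False
      then have "last (dropWhile (\<lambda>y. y \<le> c) xs) = last xs"
        by (metis last_appendR takeWhile_dropWhile_id)
      then show ?thesis unfolding C_def using False xs(3) by (metis last_ConsR)
    qed
    show "sorted C" unfolding C_def by (rule sorted_C[OF xs(4)])
  qed
  ultimately show "plen (map g xs) \<le> arc_len g a c + arc_len g c b" by simp
qed

lemma arc_shift: "arc_len g (a + real_of_int k) (b + real_of_int k) = arc_len g a b"
proof -
  have "AL (a + real_of_int k) (b + real_of_int k) = AL a b"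
  proof (intro set_eqI iffI)
    fix y assume "y \<in> AL (a + real_of_int k) (b + real_of_int k)"
    then obtain xs where xs: "y = plen (map g xs)" "xs \<noteq> []" "hd xs = a + real_of_int k"
      "last xs = b + real_of_int k" "sorted xs" by (auto simp: AL_def)
    define ys where "ys = map (\<lambda>x. x + real_of_int (-k)) xs"
    have "map g ys = map g xs" unfolding ys_def by (rule map_g_shift)
    moreover have "sorted ys" using xs(5) by (simp add: ys_def sorted_map)
    moreover have "ys \<noteq> []" "hd ys = a" "last ys = b" using xs by (auto simp: ys_def hd_map last_map)
    ultimately show "y \<in> AL a b" unfolding AL_def using xs(1)
      by (intro CollectI exI[of _ ys]) simp
  next
    fix y assume "y \<in> AL a b"
    then obtain xs where xs: "y = plen (map g xs)" "xs \<noteq> []" "hd xs = a"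
      "last xs = b" "sorted xs" by (auto simp: AL_def)
    define ys where "ys = map (\<lambda>x. x + real_of_int k) xs"
    have "map g ys = map g xs" unfolding ys_def by (rule map_g_shift)
    moreover have "sorted ys" using xs(5) by (simp add: ys_def sorted_map)
    moreover have "ys \<noteq> []" "hd ys = a + real_of_int k" "last ys = b + real_of_int k"
      using xs by (auto simp: ys_def hd_map last_map)
    ultimately show "y \<in> AL (a + real_of_int k) (b + real_of_int k)" unfolding AL_def using xs(1)
      by (intro CollectI exI[of _ ys]) simp
  qed
  then show ?thesis by (simp add: arc_len_AL)
qed

lemma arc_straight:
  assumes th: "th < 1"
    and S: "\<forall>xs. sorted_wrt (<) xs \<and> set xs \<subseteq> {lo..hi} \<longrightarrow> pturn (map g xs) \<le> th"
    and xy: "lo \<le> x" "x \<le> y" "y \<le> hi"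
  shows "(1 - th) * arc_len g x y \<le> dist (g x) (g y)"
proof -
  have "arc_len g x y \<le> dist (g x) (g y) / (1 - th)"
  proof (rule arc_le)
    show "x \<le> y" by fact
    fix xs assume xs: "xs \<noteq> []" "hd xs = x" "last xs = y" "sorted xs"
    define ys where "ys = remdups_adj xs"
    have "set xs \<subseteq> {x..y}" using sorted_hd_last_set[OF xs(4,1)] xs by simp
    then have "set ys \<subseteq> {lo..hi}" using xy by (auto simp: ys_def)
    then have "pturn (map g ys) \<le> th" using S sorted_strict_remdups_adj[OF xs(4)]
      by (auto simp: ys_def)
    moreover have "map g ys \<noteq> []" using xs by (simp add: ys_def)
    ultimately have "(1 - th) * plen (map g ys) \<le> dist (hd (map g ys)) (last (map g ys))"
      by (intro straight) auto
    moreover have "hd (map g ys) = g x" "last (map g ys) = g y" using xs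
      by (simp_all add: ys_def hd_map last_map)
    moreover have "plen (map g ys) = plen (map g xs)" by (simp add: ys_def plen_remdups_adj)
    ultimately show "plen (map g xs) \<le> dist (g x) (g y) / (1 - th)" using th by (simp add: field_simps)
  qed
  then show ?thesis using th by (simp add: field_simps)
qed

end

lemma vec_angle_cont_on: "continuous_on {u. u \<noteq> 0} (\<lambda>u. vec_angle u (v::'a::euclidean_space))"
proof (cases "v = 0")
  case True
  then show ?thesis by (simp add: vec_angle_def continuous_on_const)
next
  case False
  have c: "continuous_on {u. u \<noteq> 0} (\<lambda>u. (u \<bullet> v) / (norm u * norm v))"
    using False by (intro continuous_intros) auto
  have "(\<lambda>u. (u \<bullet> v) / (norm u * norm v)) ` {u. u \<noteq> 0} \<subseteq> {-1..1}"
  proof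
    fix y assume "y \<in> (\<lambda>u. (u \<bullet> v) / (norm u * norm v)) ` {u. u \<noteq> 0}"
    then obtain u where "y = (u \<bullet> v) / (norm u * norm v)" by blast
    then show "y \<in> {-1..1}" using vec_angle_arg_bounds[of u v] by simp
  qed
  from continuous_on_compose2[OF continuous_on_arccos' c this]
  show ?thesis unfolding vec_angle_def .
qed

lemma vec_angle_isCont: "u \<noteq> 0 \<Longrightarrow> isCont (\<lambda>u. vec_angle u (v::'a::euclidean_space)) u"
proof -
  assume "u \<noteq> 0"
  have "open {u::'a. u \<noteq> 0}" by (simp add: open_Collect_neq)
  then show ?thesis using vec_angle_cont_on[of v] \<open>u \<noteq> 0\<close>
    by (simp add: continuous_on_eq_continuous_at)
qed

section \<open>Local straightness (generic)\<close>

definition LSR :: "(real \<Rightarrow> 'a::euclidean_space) \<Rightarrow> real \<Rightarrow> bool" where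
  "LSR f s \<longleftrightarrow> (\<forall>e>0. \<exists>h>0. \<forall>xs. sorted_wrt (<) xs \<and> set xs \<subseteq> {s..s+h} \<longrightarrow> pturn (map f xs) \<le> e)"

definition LSL :: "(real \<Rightarrow> 'a::euclidean_space) \<Rightarrow> real \<Rightarrow> bool" where
  "LSL f s \<longleftrightarrow> (\<forall>e>0. \<exists>h>0. \<forall>xs. sorted_wrt (<) xs \<and> set xs \<subseteq> {s-h..s} \<longrightarrow> pturn (map f xs) \<le> e)"

lemma strict_sorted_hd_le: "sorted_wrt (<) xs \<Longrightarrow> x \<in> set xs \<Longrightarrow> hd xs \<le> (x::real)"
  by (cases xs) auto

lemma LS_generic:
  fixes f :: "real \<Rightarrow> 'a::euclidean_space"
  assumes cont: "\<And>x. isCont f x" and H: "H > 0" and inj: "inj_on f {s..s+H}"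
    and bnd: "\<forall>xs. sorted_wrt (<) xs \<and> set xs \<subseteq> {s..s+H} \<longrightarrow> pturn (map f xs) \<le> B"
  shows "LSR f s"
proof (rule ccontr)
  assume "\<not> LSR f s"
  then obtain e where e: "e > 0" and bad: "\<And>h. h > 0 \<Longrightarrow> \<exists>xs. sorted_wrt (<) xs \<and> set xs \<subseteq> {s..s+h} \<and> pturn (map f xs) > e"
    unfolding LSR_def by (auto simp: not_le)
  have pert: "\<exists>xs. sorted_wrt (<) xs \<and> set xs \<subseteq> {s<..s+h} \<and> pturn (map f xs) > e"
    if h: "0 < h" "h \<le> H" for h
  proof -
    obtain xs where xs: "sorted_wrt (<) xs" "set xs \<subseteq> {s..s+h}" "pturn (map f xs) > e"
      using bad[OF h(1)] by blast
    show ?thesis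
    proof (cases "s \<in> set xs")
      case False
      have "set xs \<subseteq> {s<..s+h}"
      proof
        fix x assume "x \<in> set xs"
        then have "x \<in> {s..s+h}" "x \<noteq> s" using xs(2) False by auto
        then show "x \<in> {s<..s+h}" by auto
      qed
      then show ?thesis using xs by blast
    next
      case True
      have "3 \<le> length xs"
      proof (rule ccontr)
        assume "\<not> 3 \<le> length xs"
        then have "pturn (map f xs) = 0" by (cases "map f xs" rule: pturn.cases) auto
        then show False using xs(3) e by simp
      qed
      then obtain x0 x1 x2 r where xr: "xs = x0 # x1 # x2 # r"
        by (cases xs rule: pturn.cases) auto
      have "x0 \<le> s" using strict_sorted_hd_le[OF xs(1) True] xr by simp
      moreover have "s \<le> x0" using xs(2) xr by auto
      ultimately have x0: "x0 = s" by simp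
      have lt: "s < x1" "x1 < x2" using xs(1) xr x0 by auto
      have x12: "x1 \<le> s + h" "x2 \<le> s + h" using xs(2) xr by auto
      have ne1: "f x1 - f s \<noteq> 0" using inj lt x12 h by (auto dest: inj_onD)
      define phi where "phi = (\<lambda>t. vec_angle (f x1 - f t) (f x2 - f x1))"
      have cphi: "isCont phi s" unfolding phi_def
        by (rule isCont_o2[where f="\<lambda>t. f x1 - f t" and g="\<lambda>u. vec_angle u (f x2 - f x1)"])
           (use cont ne1 vec_angle_isCont[OF ne1] in auto)
      define R where "R = pturn (map f (x1 # x2 # r))"
      have tot: "pturn (map f xs) = phi s + R" using xr x0 by (simp add: phi_def R_def)
      define d where "d = pturn (map f xs) - e"
      have d: "d > 0" using xs(3) by (simp add: d_def)
      obtain eta where eta: "eta > 0" "\<forall>t. t \<noteq> s \<and> norm (t - s) < eta \<longrightarrow> norm (phi t - phi s) < d"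
        using LIM_D[OF cphi[unfolded isCont_def] d] by blast
      define m0 where "m0 = min eta (x1 - s)"
      have m: "m0 \<le> x1 - s" "m0 \<le> eta" "0 < m0" using eta(1) lt by (auto simp: m0_def)
      define t where "t = s + m0 / 2"
      have t1: "s < t" unfolding t_def using m(3) by linarith
      have t2: "t < x1" unfolding t_def using m(1,3) by linarith
      have t3: "\<bar>t - s\<bar> < eta" unfolding t_def using m(2,3) by linarith
      note t = t1 t2 t3
      define ys where "ys = t # x1 # x2 # r"
      have "sorted_wrt (<) ys" using xs(1) xr t by (auto simp: ys_def)
      moreover have "set ys \<subseteq> {s<..s+h}"
      proof -
        have a1: "\<forall>y\<in>set (x2 # r). x1 < y" using xs(1) xr by simp
        have a2: "set (x2 # r) \<subseteq> {s..s+h}" using xs(2) xr by auto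
        have "set (x2 # r) \<subseteq> {s<..s+h}" using a1 a2 lt(1) by fastforce
        then show ?thesis using t x12 lt by (auto simp: ys_def)
      qed
      moreover have "pturn (map f ys) > e"
      proof -
        have "pturn (map f ys) = phi t + R" by (simp add: ys_def phi_def R_def)
        moreover have "phi t > phi s - d" using eta(2) t by force
        ultimately show ?thesis using tot by (simp add: d_def)
      qed
      ultimately show ?thesis by blast
    qed
  qed
  have build: "\<exists>xs. xs \<noteq> [] \<and> sorted_wrt (<) xs \<and> set xs \<subseteq> {s<..s+h} \<and> pturn (map f xs) \<ge> real k * e"
    if "0 < h" "h \<le> H" for k h
    using that
  proof (induction k arbitrary: h)
    case 0
    show ?case using 0 by (intro exI[of _ "[s + h]"]) (auto simp: pturn_nonneg)
  next
    case (Suc k)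
    obtain P where P: "P \<noteq> []" "sorted_wrt (<) P" "set P \<subseteq> {s<..s+h}" "pturn (map f P) \<ge> real k * e"
      using Suc.IH[OF Suc.prems] by blast
    define p0 where "p0 = hd P"
    have "p0 \<in> {s<..s+h}" using P(3) hd_in_set[OF P(1)] unfolding p0_def by blast
    then have p0: "s < p0" "p0 \<le> s + h" by auto
    define h' where "h' = min ((p0 - s)/2) H"
    have h': "0 < h'" "h' \<le> H" using p0 Suc.prems by (auto simp: h'_def)
    have hp: "h' \<le> (p0 - s)/2" unfolding h'_def by (rule min.cobounded1)
    obtain Q where Q: "sorted_wrt (<) Q" "set Q \<subseteq> {s<..s+h'}" "pturn (map f Q) > e"
      using pert[OF h'] by blast
    have Qlt: "\<forall>x\<in>set Q. \<forall>y\<in>set P. x < y"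
    proof (intro ballI)
      fix x y assume "x \<in> set Q" "y \<in> set P"
      then have "x \<le> s + h'" "p0 \<le> y" using Q(2) strict_sorted_hd_le[OF P(2)] by (auto simp: p0_def)
      moreover have "s + h' < p0" using p0 hp by argo
      ultimately show "x < y" by linarith
    qed
    have "sorted_wrt (<) (Q @ P)" using Q(1) P(2) Qlt by (simp add: sorted_wrt_append)
    moreover have "set (Q @ P) \<subseteq> {s<..s+h}"
    proof -
      have "s + h' \<le> s + h" using hp p0 by argo
      then show ?thesis using Q(2) P(3) by auto
    qed
    moreover have "pturn (map f (Q @ P)) \<ge> real (Suc k) * e"
    proof -
      have "pturn (map f Q) + pturn (map f P) \<le> pturn (map f Q @ map f P)" by (rule pturn_append_ge)
      then show ?thesis using Q(3) P(4) by (simp add: algebra_simps)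
    qed
    ultimately show ?case using P(1) by (intro exI[of _ "Q @ P"]) auto
  qed
  obtain k :: nat where k: "B / e < real k" using reals_Archimedean2 by blast
  obtain xs where xs: "sorted_wrt (<) xs" "set xs \<subseteq> {s<..s+H}" "pturn (map f xs) \<ge> real k * e"
    using build[OF H order_refl, of k] by blast
  have "pturn (map f xs) \<le> B" using bnd xs(1,2) by force
  moreover have "B < real k * e" using k e by (simp add: field_simps)
  ultimately show False using xs(3) by simp
qed

section \<open>Tangent (generic)\<close>

lemma tangent_generic:
  fixes f :: "real \<Rightarrow> 'a::euclidean_space"
  assumes L: "LSR f s" and H: "H > 0" and inj: "inj_on f {s..s+H}"
  shows "\<exists>T. norm T = 1 \<and> (\<forall>eta>0. \<exists>h>0. \<forall>t. 0 < t \<and> t < h \<longrightarrow> norm (sgn (f (s+t) - f s) - T) < eta)"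
proof -
  define u where "u = (\<lambda>t. sgn (f (s+t) - f s))"
  have nz: "f (s+t) - f s \<noteq> 0" if "0 < t" "t \<le> H" for t
    using inj that by (auto dest: inj_onD)
  have cau: "\<exists>h>0. \<forall>t1 t2. 0 < t1 \<and> t1 < h \<and> 0 < t2 \<and> t2 < h \<longrightarrow> norm (u t1 - u t2) \<le> 2 * e"
    if e: "e > 0" for e
  proof -
    obtain h0 where h0: "h0 > 0" "\<forall>xs. sorted_wrt (<) xs \<and> set xs \<subseteq> {s..s+h0} \<longrightarrow> pturn (map f xs) \<le> e"
      using L e unfolding LSR_def by blast
    define h where "h = min h0 H"
    have key: "norm (u t2 - u t1) \<le> 2 * e" if t: "0 < t1" "t1 < t2" "t2 < h" for t1 t2
    proof -
      define e1 where "e1 = f (s+t1) - f s"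
      define e2 where "e2 = f (s+t2) - f (s+t1)"
      have ne: "e1 \<noteq> 0" using nz[of t1] t by (simp add: e1_def h_def)
      have "sorted_wrt (<) [s, s+t1, s+t2]" using t by auto
      moreover have "set [s, s+t1, s+t2] \<subseteq> {s..s+h0}" using t by (auto simp: h_def)
      ultimately have "pturn (map f [s, s+t1, s+t2]) \<le> e" using h0(2) by blast
      then have va: "vec_angle e1 e2 \<le> e" by (simp add: e1_def e2_def)
      have "norm (sgn (e1 + e2) - sgn e1) \<le> 2 * norm (sgn e2 - sgn e1)" by (rule sgn_sum_close[OF ne])
      also have "norm (sgn e2 - sgn e1) \<le> vec_angle e1 e2"
        using sgn_diff_le_angle[of e1 e2] by (simp add: norm_minus_commute)
      finally have "norm (sgn (e1 + e2) - sgn e1) \<le> 2 * e" using va by simp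
      moreover have "e1 + e2 = f (s+t2) - f s" by (simp add: e1_def e2_def)
      ultimately show ?thesis unfolding u_def e1_def by metis
    qed
    have "\<forall>t1 t2. 0 < t1 \<and> t1 < h \<and> 0 < t2 \<and> t2 < h \<longrightarrow> norm (u t1 - u t2) \<le> 2 * e"
    proof (intro allI impI)
      fix t1 t2 assume a: "0 < t1 \<and> t1 < h \<and> 0 < t2 \<and> t2 < h"
      show "norm (u t1 - u t2) \<le> 2 * e"
      proof (cases t1 t2 rule: linorder_cases)
        case less then show ?thesis using key[of t1 t2] a by (simp add: norm_minus_commute)
      next
        case equal then show ?thesis using e by simp
      next
        case greater then show ?thesis using key[of t2 t1] a by simp
      qed
    qed
    moreover have "h > 0" using h0 H by (simp add: h_def)
    ultimately show ?thesis by blast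
  qed
  define a where "a = (\<lambda>n::nat. u (H / (real n + 2)))"
  have tpos: "0 < H / (real n + 2)" for n using H by simp
  have tsmall: "\<exists>M. \<forall>n\<ge>M. H / (real n + 2) < h" if "h > 0" for h
  proof -
    obtain M :: nat where M: "H / h < real M" using reals_Archimedean2 by blast
    have "H / (real n + 2) < h" if "n \<ge> M" for n
    proof -
      have "H < h * real M" using M \<open>h > 0\<close> by (simp add: field_simps)
      also have "\<dots> \<le> h * (real n + 2)" using that \<open>h > 0\<close> by (intro mult_left_mono) auto
      finally show ?thesis by (simp add: field_simps)
    qed
    then show ?thesis by blast
  qed
  have "Cauchy a"
  proof (rule CauchyI)
    fix r :: real assume r: "r > 0"
    obtain h where h: "h > 0" "\<forall>t1 t2. 0 < t1 \<and> t1 < h \<and> 0 < t2 \<and> t2 < h \<longrightarrow> norm (u t1 - u t2) \<le> 2 * (r/4)"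
      using cau[of "r/4"] r by auto
    obtain M where M: "\<forall>n\<ge>M. H / (real n + 2) < h" using tsmall[OF h(1)] by blast
    have "\<forall>m\<ge>M. \<forall>n\<ge>M. norm (a m - a n) < r"
    proof (intro allI impI)
      fix m n assume "m \<ge> M" "n \<ge> M"
      then have "norm (a m - a n) \<le> 2 * (r/4)" using h(2) M tpos unfolding a_def by blast
      then show "norm (a m - a n) < r" using r by simp
    qed
    then show "\<exists>M. \<forall>m\<ge>M. \<forall>n\<ge>M. norm (a m - a n) < r" by blast
  qed
  then obtain T where aT: "a \<longlonglongrightarrow> T" using Cauchy_convergent_iff convergent_def by blast
  have conv: "\<exists>h>0. \<forall>t. 0 < t \<and> t < h \<longrightarrow> norm (u t - T) < eta" if eta: "eta > 0" for eta
  proof -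
    obtain h where h: "h > 0" "\<forall>t1 t2. 0 < t1 \<and> t1 < h \<and> 0 < t2 \<and> t2 < h \<longrightarrow> norm (u t1 - u t2) \<le> 2 * (eta/4)"
      using cau[of "eta/4"] eta by auto
    obtain M where M: "\<forall>n\<ge>M. H / (real n + 2) < h" using tsmall[OF h(1)] by blast
    obtain N where N: "\<forall>n\<ge>N. norm (a n - T) < eta/4" using LIMSEQ_D[OF aT, of "eta/4"] eta by auto
    have "norm (u t - T) < eta" if t: "0 < t" "t < h" for t
    proof -
      define n where "n = max M N"
      have "norm (u t - a n) \<le> 2 * (eta/4)" using h(2) t M tpos unfolding a_def n_def by auto
      moreover have "norm (a n - T) < eta/4" using N by (simp add: n_def)
      moreover have "norm (u t - T) \<le> norm (u t - a n) + norm (a n - T)" by (rule norm_tri3)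
      ultimately show ?thesis using eta by linarith
    qed
    then show ?thesis using h(1) by blast
  qed
  have "norm T = 1"
  proof (rule ccontr)
    assume ne: "norm T \<noteq> 1"
    define eta where "eta = \<bar>norm T - 1\<bar>"
    have eta: "eta > 0" using ne by (simp add: eta_def)
    obtain h where h: "h > 0" "\<forall>t. 0 < t \<and> t < h \<longrightarrow> norm (u t - T) < eta" using conv[OF eta] by blast
    define t where "t = min h H / 2"
    have t: "0 < t" "t < h" "t \<le> H" using h H by (auto simp: t_def)
    have "norm (u t) = 1" using nz[OF t(1,3)] by (simp add: u_def norm_sgn)
    moreover have "norm (u t - T) < eta" using h t by blast
    moreover have "\<bar>norm (u t) - norm T\<bar> \<le> norm (u t - T)" by (rule norm_triangle_ineq3)
    ultimately show False by (simp add: eta_def)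
  qed
  then show ?thesis using conv unfolding u_def by blast
qed

context sccurve
begin

lemma LSR_shift: "LSR g (s + real_of_int k) \<Longrightarrow> LSR g s"
  unfolding LSR_def
proof (intro allI impI)
  fix e :: real assume L: "\<forall>e>0. \<exists>h>0. \<forall>xs. sorted_wrt (<) xs \<and> set xs \<subseteq> {s + real_of_int k..s + real_of_int k + h} \<longrightarrow> pturn (map g xs) \<le> e"
    and e: "e > 0"
  then obtain h where h: "h > 0" "\<forall>xs. sorted_wrt (<) xs \<and> set xs \<subseteq> {s + real_of_int k..s + real_of_int k + h} \<longrightarrow> pturn (map g xs) \<le> e"
    by blast
  have "pturn (map g xs) \<le> e" if xs: "sorted_wrt (<) xs" "set xs \<subseteq> {s..s+h}" for xs
  proof -
    define ys where "ys = map (\<lambda>x. x + real_of_int k) xs"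
    have "sorted_wrt (<) ys" using xs(1) by (simp add: ys_def sorted_wrt_map)
    moreover have "set ys \<subseteq> {s + real_of_int k..s + real_of_int k + h}" using xs(2) by (auto simp: ys_def)
    ultimately have "pturn (map g ys) \<le> e" using h(2) by blast
    moreover have "map g ys = map g xs" unfolding ys_def by (rule map_g_shift)
    ultimately show ?thesis by simp
  qed
  then show "\<exists>h>0. \<forall>xs. sorted_wrt (<) xs \<and> set xs \<subseteq> {s..s + h} \<longrightarrow> pturn (map g xs) \<le> e"
    using h(1) by blast
qed

lemma LSL_shift: "LSL g (s + real_of_int k) \<Longrightarrow> LSL g s"
  unfolding LSL_def
proof (intro allI impI)
  fix e :: real assume L: "\<forall>e>0. \<exists>h>0. \<forall>xs. sorted_wrt (<) xs \<and> set xs \<subseteq> {s + real_of_int k - h..s + real_of_int k} \<longrightarrow> pturn (map g xs) \<le> e"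
    and e: "e > 0"
  then obtain h where h: "h > 0" "\<forall>xs. sorted_wrt (<) xs \<and> set xs \<subseteq> {s + real_of_int k - h..s + real_of_int k} \<longrightarrow> pturn (map g xs) \<le> e"
    by blast
  have "pturn (map g xs) \<le> e" if xs: "sorted_wrt (<) xs" "set xs \<subseteq> {s-h..s}" for xs
  proof -
    define ys where "ys = map (\<lambda>x. x + real_of_int k) xs"
    have "sorted_wrt (<) ys" using xs(1) by (simp add: ys_def sorted_wrt_map)
    moreover have "set ys \<subseteq> {s + real_of_int k - h..s + real_of_int k}" using xs(2) by (auto simp: ys_def)
    ultimately have "pturn (map g ys) \<le> e" using h(2) by blast
    moreover have "map g ys = map g xs" unfolding ys_def by (rule map_g_shift)
    ultimately show ?thesis by simp
  qed
  then show "\<exists>h>0. \<forall>xs. sorted_wrt (<) xs \<and> set xs \<subseteq> {s-h..s} \<longrightarrow> pturn (map g xs) \<le> e"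
    using h(1) by blast
qed

lemma inj_short: "b - a < 1 \<Longrightarrow> inj_on g {a..b}"
proof (rule inj_onI, rule ccontr)
  fix x y assume a: "b - a < 1" "x \<in> {a..b}" "y \<in> {a..b}" "g x = g y" "x \<noteq> y"
  then have "\<bar>x - y\<bar> < 1" by auto
  then show False using g_inj_ne[OF a(5)] a(4) by blast
qed

lemma inj_short_neg: "b - a < 1 \<Longrightarrow> inj_on (\<lambda>t. g (-t)) {a..b}"
proof (rule inj_onI, rule ccontr)
  fix x y assume a: "b - a < 1" "x \<in> {a..b}" "y \<in> {a..b}" "g (-x) = g (-y)" "x \<noteq> y"
  then have "\<bar>-x - -y\<bar> < 1" "-x \<noteq> -y" by auto
  then show False using g_inj_ne a(4) by blast
qed

lemma isCont_gneg: "isCont (\<lambda>t. g (-t)) x"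
  using isCont_o2[where f=uminus and a=x and g=g] isCont_g by simp

lemma map_neg_rev: "map (\<lambda>t. g (-t)) xs = rev (map g (rev (map uminus xs)))"
  by (simp add: rev_map)

lemma sorted_neg_rev: "sorted_wrt (<) (xs::real list) \<Longrightarrow> sorted_wrt (<) (rev (map uminus xs))"
  by (simp add: sorted_wrt_rev sorted_wrt_map)

lemma LSR_all: "LSR g s"
proof -
  define s' where "s' = s - real_of_int (floor s)"
  have s': "0 \<le> s'" "s' < 1" using frac_ge_0[of s] frac_lt_1[of s] by (simp_all add: s'_def frac_def)
  define H where "H = (1 - s') / 2"
  have H: "H > 0" using s' by (simp add: H_def)
  have "LSR g s'"
  proof (rule LS_generic[OF isCont_g H])
    show "inj_on g {s'..s'+H}" by (rule inj_short) (use s' in \<open>simp add: H_def\<close>)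
    show "\<forall>xs. sorted_wrt (<) xs \<and> set xs \<subseteq> {s'..s'+H} \<longrightarrow> pturn (map g xs) \<le> Bt"
    proof (intro allI impI)
      fix xs :: "real list" assume "sorted_wrt (<) xs \<and> set xs \<subseteq> {s'..s'+H}"
      moreover have "{s'..s'+H} \<subseteq> {0..1}"
      proof -
        have "s' + H \<le> 1" using s' unfolding H_def by argo
        then show ?thesis using s' by auto
      qed
      ultimately show "pturn (map g xs) \<le> Bt" using Bt by blast
    qed
  qed
  moreover have "s' = s + real_of_int (- floor s)" by (simp add: s'_def)
  ultimately show ?thesis using LSR_shift by metis
qed

lemma LSL_all: "LSL g s"
proof -
  define s' where "s' = s - real_of_int (ceiling s) + 1"
  have s': "0 < s'" "s' \<le> 1" unfolding s'_def by linarith+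
  define H where "H = s' / 2"
  have H: "H > 0" using s' by (simp add: H_def)
  have LR: "LSR (\<lambda>t. g (-t)) (-s')"
  proof (rule LS_generic[OF isCont_gneg H])
    show "inj_on (\<lambda>t. g (-t)) {-s'..-s'+H}" by (rule inj_short_neg) (use s' in \<open>simp add: H_def\<close>)
    show "\<forall>xs. sorted_wrt (<) xs \<and> set xs \<subseteq> {-s'..-s'+H} \<longrightarrow> pturn (map (\<lambda>t. g (-t)) xs) \<le> Bt"
    proof (intro allI impI)
      fix xs :: "real list" assume xs: "sorted_wrt (<) xs \<and> set xs \<subseteq> {-s'..-s'+H}"
      define ys where "ys = rev (map uminus xs)"
      have "sorted_wrt (<) ys" using xs sorted_neg_rev by (simp add: ys_def)
      moreover have "set ys \<subseteq> {0..1}"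
      proof -
        have "0 \<le> s' - H" using s' unfolding H_def by argo
        then show ?thesis using xs s' by (auto simp: ys_def)
      qed
      ultimately have "pturn (map g ys) \<le> Bt" using Bt by blast
      then show "pturn (map (\<lambda>t. g (-t)) xs) \<le> Bt" by (simp add: map_neg_rev pturn_rev ys_def)
    qed
  qed
  have "LSL g s'"
    unfolding LSL_def
  proof (intro allI impI)
    fix e :: real assume e: "e > 0"
    obtain h where h: "h > 0" "\<forall>xs. sorted_wrt (<) xs \<and> set xs \<subseteq> {-s'..-s'+h} \<longrightarrow> pturn (map (\<lambda>t. g (-t)) xs) \<le> e"
      using LR e unfolding LSR_def by blast
    have "pturn (map g xs) \<le> e" if xs: "sorted_wrt (<) xs" "set xs \<subseteq> {s'-h..s'}" for xs
    proof -
      define ys where "ys = rev (map uminus xs)"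
      have "sorted_wrt (<) ys" using xs sorted_neg_rev by (simp add: ys_def)
      moreover have "set ys \<subseteq> {-s'..-s'+h}" using xs by (auto simp: ys_def)
      ultimately have "pturn (map (\<lambda>t. g (-t)) ys) \<le> e" using h(2) by blast
      moreover have "map (\<lambda>t. g (-t)) ys = rev (map g xs)" by (simp add: ys_def rev_map comp_def)
      ultimately show ?thesis by (simp add: pturn_rev)
    qed
    then show "\<exists>h>0. \<forall>xs. sorted_wrt (<) xs \<and> set xs \<subseteq> {s'-h..s'} \<longrightarrow> pturn (map g xs) \<le> e"
      using h(1) by blast
  qed
  moreover have "s' = s + real_of_int (1 - ceiling s)" by (simp add: s'_def)
  ultimately show ?thesis using LSL_shift by metis
qed

lemma LSR_neg: "LSR (\<lambda>t. g (-t)) (-s)"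
  unfolding LSR_def
proof (intro allI impI)
  fix e :: real assume e: "e > 0"
  obtain h where h: "h > 0" "\<forall>xs. sorted_wrt (<) xs \<and> set xs \<subseteq> {s-h..s} \<longrightarrow> pturn (map g xs) \<le> e"
    using LSL_all[of s] e unfolding LSL_def by blast
  have "pturn (map (\<lambda>t. g (-t)) xs) \<le> e" if xs: "sorted_wrt (<) xs" "set xs \<subseteq> {-s..-s+h}" for xs
  proof -
    define ys where "ys = rev (map uminus xs)"
    have "sorted_wrt (<) ys" using xs sorted_neg_rev by (simp add: ys_def)
    moreover have "set ys \<subseteq> {s-h..s}" using xs by (auto simp: ys_def)
    ultimately have "pturn (map g ys) \<le> e" using h(2) by blast
    then show ?thesis by (simp add: map_neg_rev pturn_rev ys_def)
  qed
  then show "\<exists>h>0. \<forall>xs. sorted_wrt (<) xs \<and> set xs \<subseteq> {-s..-s+h} \<longrightarrow> pturn (map (\<lambda>t. g (-t)) xs) \<le> e"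
    using h(1) by blast
qed

lemma tangent_right:
  "\<exists>T. norm T = 1 \<and> (\<forall>eta>0. \<exists>h>0. \<forall>t. 0 < t \<and> t < h \<longrightarrow> norm (sgn (g (s+t) - g s) - T) < eta)"
  by (rule tangent_generic[OF LSR_all, of "1/2"]) (auto intro: inj_short)

lemma tangent_left:
  "\<exists>T. norm T = 1 \<and> (\<forall>eta>0. \<exists>h>0. \<forall>t. 0 < t \<and> t < h \<longrightarrow> norm (sgn (g s - g (s-t)) - T) < eta)"
proof -
  obtain T where T: "norm T = 1" "\<forall>eta>0. \<exists>h>0. \<forall>t. 0 < t \<and> t < h \<longrightarrow> norm (sgn (g (-(-s+t)) - g (-(-s))) - T) < eta"
  proof -
    have "inj_on (\<lambda>t. g (-t)) {-s..-s + 1/2}" by (rule inj_short_neg) simp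
    from tangent_generic[OF LSR_neg[of s] _ this] show ?thesis using that by auto
  qed
  have "norm (sgn (g s - g (s-t)) - (-T)) = norm (sgn (g (-(-s+t)) - g (-(-s))) - T)" for t
  proof -
    have q: "sgn (g s - g (s-t)) - (-T) = - (sgn (g (s-t) - g s) - T)"
      by (metis minus_diff_eq sgn_minus minus_minus diff_minus_eq_add uminus_add_conv_diff)
    have e1: "-(-s+t) = s - t" "-(-s) = s" by simp_all
    show ?thesis unfolding e1 q by (rule norm_minus_cancel)
  qed
  then show ?thesis using T by (intro exI[of _ "-T"]) auto
qed

end

context sccurve
begin

definition Tp :: "real \<Rightarrow> 'a" where
  "Tp s = (SOME T. norm T = 1 \<and> (\<forall>eta>0. \<exists>h>0. \<forall>t. 0 < t \<and> t < h \<longrightarrow> norm (sgn (g (s+t) - g s) - T) < eta))"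

definition Tm :: "real \<Rightarrow> 'a" where
  "Tm s = (SOME T. norm T = 1 \<and> (\<forall>eta>0. \<exists>h>0. \<forall>t. 0 < t \<and> t < h \<longrightarrow> norm (sgn (g s - g (s-t)) - T) < eta))"

lemma Tp: "norm (Tp s) = 1" "\<forall>eta>0. \<exists>h>0. \<forall>t. 0 < t \<and> t < h \<longrightarrow> norm (sgn (g (s+t) - g s) - Tp s) < eta"
  using someI_ex[OF tangent_right[of s]] unfolding Tp_def by blast+

lemma Tm: "norm (Tm s) = 1" "\<forall>eta>0. \<exists>h>0. \<forall>t. 0 < t \<and> t < h \<longrightarrow> norm (sgn (g s - g (s-t)) - Tm s) < eta"
  using someI_ex[OF tangent_left[of s]] unfolding Tm_def by blast+

lemma param_01: "s \<in> {0..<1} \<Longrightarrow> param g (g s) = s"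
  using param_g[of s] by (simp add: floor_eq_iff)

lemma tangent_plus_eq: "s \<in> {0..<1} \<Longrightarrow> tangent_plus g (g s) = Tp s"
proof -
  assume s: "s \<in> {0..<1}"
  have "((\<lambda>t. (g t - g s) /\<^sub>R norm (g t - g s)) \<longlongrightarrow> Tp s) (at_right s)"
    unfolding tendsto_iff
  proof (intro allI impI)
    fix e :: real assume e: "e > 0"
    obtain h where h: "h > 0" "\<forall>t. 0 < t \<and> t < h \<longrightarrow> norm (sgn (g (s+t) - g s) - Tp s) < e"
      using Tp(2) e by blast
    have ev: "eventually (\<lambda>t. t \<in> {s<..<s+h}) (at_right s)" by (rule eventually_at_right_real) (use h in simp)
    show "eventually (\<lambda>t. dist ((g t - g s) /\<^sub>R norm (g t - g s)) (Tp s) < e) (at_right s)"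
    proof (rule eventually_mono[OF ev])
      fix t assume t: "t \<in> {s<..<s+h}"
      have "norm (sgn (g (s + (t - s)) - g s) - Tp s) < e" using h(2)[rule_format, of "t - s"] t by simp
      then show "dist ((g t - g s) /\<^sub>R norm (g t - g s)) (Tp s) < e" by (simp add: dist_norm sgn_div_norm)
    qed
  qed
  then have "Lim (at_right s) (\<lambda>t. (g t - g s) /\<^sub>R norm (g t - g s)) = Tp s"
    by (intro tendsto_Lim) (simp add: trivial_limit_def[symmetric])
  then show ?thesis unfolding tangent_plus_def param_01[OF s] Let_def .
qed

lemma tangent_minus_eq: "s \<in> {0..<1} \<Longrightarrow> tangent_minus g (g s) = Tm s"
proof -
  assume s: "s \<in> {0..<1}"
  have "((\<lambda>t. (g s - g t) /\<^sub>R norm (g s - g t)) \<longlongrightarrow> Tm s) (at_left s)"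
    unfolding tendsto_iff
  proof (intro allI impI)
    fix e :: real assume e: "e > 0"
    obtain h where h: "h > 0" "\<forall>t. 0 < t \<and> t < h \<longrightarrow> norm (sgn (g s - g (s-t)) - Tm s) < e"
      using Tm(2) e by blast
    have ev: "eventually (\<lambda>t. t \<in> {s-h<..<s}) (at_left s)" by (rule eventually_at_left_real) (use h in simp)
    show "eventually (\<lambda>t. dist ((g s - g t) /\<^sub>R norm (g s - g t)) (Tm s) < e) (at_left s)"
    proof (rule eventually_mono[OF ev])
      fix t assume t: "t \<in> {s-h<..<s}"
      have "norm (sgn (g s - g (s - (s - t))) - Tm s) < e" using h(2)[rule_format, of "s - t"] t by simp
      then show "dist ((g s - g t) /\<^sub>R norm (g s - g t)) (Tm s) < e" by (simp add: dist_norm sgn_div_norm)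
    qed
  qed
  then have "Lim (at_left s) (\<lambda>t. (g s - g t) /\<^sub>R norm (g s - g t)) = Tm s"
    by (intro tendsto_Lim) (simp add: trivial_limit_def[symmetric])
  then show ?thesis unfolding tangent_minus_def param_01[OF s] Let_def .
qed

lemma Len_rep:
  assumes "sig \<le> tau" "tau \<le> sig + 1"
  shows "Len g (g sig) (g tau) = min (arc_len g sig tau) (arc_len g tau (sig + 1))"
proof -
  define k where "k = floor sig"
  define s where "s = sig - real_of_int k"
  define t where "t = tau - real_of_int (floor tau)"
  have ps: "param g (g sig) = s" by (simp add: param_g s_def k_def)
  have pt: "param g (g tau) = t" by (simp add: param_g t_def)
  have fl: "floor tau = k \<or> floor tau = k + 1"
  proof -
    have "k \<le> floor tau" using assms(1) by (simp add: k_def floor_mono)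
    moreover have "floor tau \<le> k + 1"
    proof -
      have "tau < real_of_int k + 2" using assms(2) by (simp add: k_def) linarith
      then show ?thesis by linarith
    qed
    ultimately show ?thesis by linarith
  qed
  have sh: "arc_len g (a - real_of_int j) (b - real_of_int j) = arc_len g a b" for a b j
    using arc_shift[of "a - real_of_int j" j "b - real_of_int j"] by simp
  show ?thesis
  proof (cases "floor tau = k")
    case True
    then have e: "t = tau - real_of_int k" by (simp add: t_def)
    have "s \<le> t" using assms(1) by (simp add: s_def e)
    then have "Len g (g sig) (g tau) = min (arc_len g s t) (arc_len g t (s + 1))"
      unfolding Len_def ps pt Let_def by simp
    also have "arc_len g s t = arc_len g sig tau" unfolding s_def e by (rule sh)
    also have "arc_len g t (s + 1) = arc_len g tau (sig + 1)"
      using sh[of tau k "sig + 1"] by (simp add: s_def e algebra_simps)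
    finally show ?thesis .
  next
    case False
    then have e: "t = tau - real_of_int (k + 1)" using fl by (simp add: t_def)
    show ?thesis
    proof (cases "t < s")
      case True
      then have "\<not> s \<le> t" by simp
      then have "Len g (g sig) (g tau) = min (arc_len g t s) (arc_len g s (t + 1))"
        unfolding Len_def ps pt Let_def by simp
      also have "arc_len g t s = arc_len g tau (sig + 1)"
        using sh[of tau "k+1" "sig + 1"] by (simp add: s_def e algebra_simps)
      also have "arc_len g s (t + 1) = arc_len g sig tau"
        using sh[of sig k tau] by (simp add: s_def e algebra_simps)
      finally show ?thesis by (simp add: min.commute)
    next
      case False
      have "t \<le> s" using assms(2) by (simp add: s_def e) 
      then have ts: "t = s" using False by simp
      then have tau: "tau = sig + 1" by (simp add: s_def e) 
      have "Len g (g sig) (g tau) = min (arc_len g s s) (arc_len g s (s + 1))"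
        unfolding Len_def ps pt Let_def ts by simp
      also have "arc_len g s s = arc_len g tau (sig + 1)"
        using sh[of "sig + 1" "k+1" "sig + 1"] by (simp add: s_def tau algebra_simps)
      also have "arc_len g s (s + 1) = arc_len g sig tau"
        using sh[of sig k "sig + 1"] by (simp add: s_def tau algebra_simps)
      finally show ?thesis by (simp add: min.commute)
    qed
  qed
qed

lemma Len_sym: "Len g p q = Len g q p"
  unfolding Len_def Let_def by (auto simp: min.commute)

lemma delta_sym: "delta g p q = delta g q p"
  unfolding delta_def by (auto simp: Len_sym dist_commute)

lemma param_near:
  assumes h: "h > 0"
  shows "\<exists>rho>0. \<forall>sig. dist (g sig) (g s0) < rho \<longrightarrow> (\<exists>k::int. \<bar>sig - real_of_int k - s0\<bar> < h)"
proof -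
  define h' where "h' = min h (1/2)"
  have h': "0 < h'" "h' \<le> h" "h' \<le> 1/2" using h by (auto simp: h'_def)
  define K where "K = {s0 - 1/2..s0 + 1/2} \<inter> {t. h' \<le> \<bar>t - s0\<bar>}"
  have cK: "compact K"
  proof -
    have "closed {t. h' \<le> \<bar>t - s0\<bar>}"
      by (intro closed_Collect_le continuous_intros)
    then show ?thesis unfolding K_def by (intro compact_Int_closed) auto
  qed
  have pos: "dist (g t) (g s0) > 0" if "t \<in> K" for t
  proof -
    have "t \<noteq> s0" "\<bar>t - s0\<bar> < 1" using that h' by (auto simp: K_def)
    then show ?thesis using g_inj_ne by simp
  qed
  obtain rho where rho: "rho > 0" "\<forall>t\<in>K. rho \<le> dist (g t) (g s0)"
  proof (cases "K = {}")
    case True then show ?thesis using that[of 1] by auto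
  next
    case False
    have "continuous_on K (\<lambda>t. dist (g t) (g s0))"
      by (intro continuous_intros continuous_on_subset[OF cont]) auto
    from continuous_attains_inf[OF cK False this] obtain t0 where
      "t0 \<in> K" "\<forall>t\<in>K. dist (g t0) (g s0) \<le> dist (g t) (g s0)" by blast
    then show ?thesis using that[of "dist (g t0) (g s0)"] pos by blast
  qed
  have "\<exists>k::int. \<bar>sig - real_of_int k - s0\<bar> < h" if d: "dist (g sig) (g s0) < rho" for sig
  proof -
    define k where "k = floor (sig - s0 + 1/2)"
    define sg where "sg = sig - real_of_int k"
    have b: "s0 - 1/2 \<le> sg" "sg \<le> s0 + 1/2" unfolding sg_def k_def by linarith+
    have "g sg = g sig" unfolding sg_def by (rule per_int')
    then have "dist (g sg) (g s0) < rho" using d by simp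
    then have "sg \<notin> K" using rho(2) by force
    then have "\<bar>sg - s0\<bar> < h'" using b by (auto simp: K_def)
    then have "\<bar>sig - real_of_int k - s0\<bar> < h" using h' by (simp add: sg_def)
    then show ?thesis by blast
  qed
  then show ?thesis using rho(1) by blast
qed

lemma arc_small:
  assumes e: "e > 0"
  shows "\<exists>h>0. \<forall>h'. 0 < h' \<and> h' \<le> h \<longrightarrow> arc_len g x (x + h') \<le> e \<and> arc_len g (x - h') x \<le> e"
proof -
  obtain hR where hR: "hR > 0" "\<forall>xs. sorted_wrt (<) xs \<and> set xs \<subseteq> {x..x+hR} \<longrightarrow> pturn (map g xs) \<le> 1/2"
    using LSR_all[of x] unfolding LSR_def by (meson zero_less_divide_1_iff zero_less_numeral)
  obtain hL where hL: "hL > 0" "\<forall>xs. sorted_wrt (<) xs \<and> set xs \<subseteq> {x-hL..x} \<longrightarrow> pturn (map g xs) \<le> 1/2"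
    using LSL_all[of x] unfolding LSL_def by (meson zero_less_divide_1_iff zero_less_numeral)
  obtain d where d: "d > 0" "\<forall>t. dist t x < d \<longrightarrow> dist (g t) (g x) < e/2"
    using isCont_g[of x] e unfolding continuous_at_eps_delta by (meson half_gt_zero)
  define h where "h = min (min hR hL) (d/2)"
  have h: "h > 0" "h \<le> hR" "h \<le> hL" "h < d" using hR hL d by (auto simp: h_def)
  have "arc_len g x (x + h') \<le> e \<and> arc_len g (x - h') x \<le> e" if h': "0 < h'" "h' \<le> h" for h'
  proof
    have "(1 - 1/2) * arc_len g x (x + h') \<le> dist (g x) (g (x + h'))"
      by (rule arc_straight[OF _ hR(2)]) (use h h' in auto)
    moreover have "dist (g (x + h')) (g x) < e/2" using d(2) h h' by (simp add: dist_real_def)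
    ultimately show "arc_len g x (x + h') \<le> e" by (simp add: dist_commute)
    have "(1 - 1/2) * arc_len g (x - h') x \<le> dist (g (x - h')) (g x)"
      by (rule arc_straight[OF _ hL(2)]) (use h h' in auto)
    moreover have "dist (g (x - h')) (g x) < e/2" using d(2) h h' by (simp add: dist_real_def)
    ultimately show "arc_len g (x - h') x \<le> e" by simp
  qed
  then show ?thesis using h(1) by blast
qed

end

lemma norm_scale_sgn: "norm x *\<^sub>R sgn x = (x::'a::real_normed_vector)"
  by (cases "x = 0") (simp_all add: sgn_div_norm)

lemma cone_bound:
  fixes U V :: "'a::euclidean_space"
  assumes U: "norm U = 1" and V: "norm V = 1" and AB: "0 \<le> A" "0 \<le> B"
    and c: "0 \<le> c" "c^2 = (1 + U \<bullet> V) / 2"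
  shows "(A + B) * c \<le> norm (A *\<^sub>R U + B *\<^sub>R V)"
proof -
  define k where "k = U \<bullet> V"
  have k1: "k \<le> 1" using norm_cauchy_schwarz[of U V] U V by (simp add: k_def)
  have UU: "U \<bullet> U = 1" "V \<bullet> V = 1" using U V by (simp_all flip: power2_norm_eq_inner)
  have "(norm (A *\<^sub>R U + B *\<^sub>R V))^2 = (A *\<^sub>R U + B *\<^sub>R V) \<bullet> (A *\<^sub>R U + B *\<^sub>R V)"
    by (rule power2_norm_eq_inner)
  also have "\<dots> = A * A * (U \<bullet> U) + B * B * (V \<bullet> V) + 2 * A * B * (U \<bullet> V)"
    by (simp add: inner_add_left inner_add_right inner_commute algebra_simps)
  also have "\<dots> = A^2 + B^2 + 2 * A * B * k" using UU by (simp add: k_def power2_eq_square)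
  finally have "(norm (A *\<^sub>R U + B *\<^sub>R V))^2 = A^2 + B^2 + 2 * A * B * k" .
  moreover have "((A + B) * c)^2 = (A + B)^2 * (1 + k) / 2" using c by (simp add: power_mult_distrib k_def)
  moreover have "(A + B)^2 * (1 + k) / 2 \<le> A^2 + B^2 + 2 * A * B * k"
  proof -
    have "A^2 + B^2 + 2 * A * B * k - (A + B)^2 * (1 + k) / 2 = (1 - k) * (A - B)^2 / 2"
      by (simp add: power2_eq_square algebra_simps)
    moreover have "0 \<le> (1 - k) * (A - B)^2 / 2" using k1 by simp
    ultimately show ?thesis by linarith
  qed
  ultimately have "((A + B) * c)^2 \<le> (norm (A *\<^sub>R U + B *\<^sub>R V))^2" by simp
  then show ?thesis by (rule power2_le_imp_le) simp
qed

context sccurve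
begin

lemma cont_comp: "continuous_on A f \<Longrightarrow> continuous_on A (\<lambda>x. g (f x))"
  by (rule continuous_on_compose2[OF cont]) auto

definition kk :: "real \<Rightarrow> real" where "kk s = Tm s \<bullet> Tp s"
definition ca :: "real \<Rightarrow> real" where "ca s = cos (vec_angle (Tm s) (Tp s) / 2)"

lemma angle_facts:
  shows "vec_angle (Tm s) (Tp s) = arccos (kk s)" "-1 \<le> kk s" "kk s \<le> 1"
    "0 \<le> ca s" "(ca s)^2 = (1 + kk s) / 2" "ca s \<le> 1"
    "norm (Tm s + Tp s) = 2 * ca s"
    "vec_angle (Tm s) (Tp s) = pi \<longleftrightarrow> ca s = 0"
proof -
  show va: "vec_angle (Tm s) (Tp s) = arccos (kk s)" by (simp add: vec_angle_def kk_def Tm(1) Tp(1))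
  have kb: "-1 \<le> kk s \<and> kk s \<le> 1" using vec_angle_arg_bounds[of "Tm s" "Tp s"] by (simp add: kk_def Tm(1) Tp(1))
  then show "-1 \<le> kk s" "kk s \<le> 1" by auto
  define a where "a = arccos (kk s)"
  have a: "0 \<le> a" "a \<le> pi" "cos a = kk s" using kb by (auto simp: a_def arccos_lbound arccos_ubound cos_arccos)
  have cae: "ca s = cos (a/2)" by (simp add: ca_def va a_def)
  show c0: "0 \<le> ca s" unfolding cae by (rule cos_ge_zero) (use a in auto)
  have "cos a = 2 * (cos (a/2))^2 - 1" using cos_double_cos[of "a/2"] by simp
  then show c2: "(ca s)^2 = (1 + kk s) / 2" using a(3) cae by simp
  show "ca s \<le> 1" unfolding cae by simp
  have TT: "Tm s \<bullet> Tm s = 1" "Tp s \<bullet> Tp s = 1" using Tm(1)[of s] Tp(1)[of s]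
    by (simp_all flip: power2_norm_eq_inner)
  have "(norm (Tm s + Tp s))^2 = (Tm s + Tp s) \<bullet> (Tm s + Tp s)" by (rule power2_norm_eq_inner)
  also have "\<dots> = Tm s \<bullet> Tm s + Tp s \<bullet> Tp s + 2 * (Tm s \<bullet> Tp s)"
    by (simp add: inner_add_left inner_add_right inner_commute)
  also have "\<dots> = 2 + 2 * kk s" using TT by (simp add: kk_def)
  finally have "(norm (Tm s + Tp s))^2 = 2 + 2 * kk s" .
  also have "\<dots> = (2 * ca s)^2" using c2 by (simp add: power_mult_distrib)
  finally show "norm (Tm s + Tp s) = 2 * ca s" using c0
    by (metis norm_ge_zero power2_eq_iff_nonneg zero_le_mult_iff zero_le_numeral)
  show "vec_angle (Tm s) (Tp s) = pi \<longleftrightarrow> ca s = 0"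
  proof
    assume "vec_angle (Tm s) (Tp s) = pi"
    then show "ca s = 0" by (simp add: ca_def)
  next
    assume "ca s = 0"
    then have "kk s = -1" using c2 by simp
    then show "vec_angle (Tm s) (Tp s) = pi" using va by simp
  qed
qed

lemma delta_diag:
  assumes "s \<in> {0..<1}"
  shows "delta g (g s) (g s) = (if ca s = 0 then \<infinity> else ereal (1 / ca s))"
proof -
  have "turning_angle g (g s) = vec_angle (Tm s) (Tp s)"
    unfolding turning_angle_def using tangent_minus_eq[OF assms] tangent_plus_eq[OF assms] by simp
  then show ?thesis unfolding delta_def using angle_facts(8)[of s] by (simp add: ca_def)
qed

lemma delta_offdiag: "p \<noteq> q \<Longrightarrow> delta g p q = ereal (Len g p q / dist p q)"
  by (simp add: delta_def)

lemma D1_pair: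
  assumes eta: "eta > 0"
  shows "\<exists>x y. 0 < x \<and> 0 < y \<and> g (s0 - x) \<noteq> g (s0 + y) \<and>
     2 / (norm (Tm s0 + Tp s0) + 2 * eta) \<le> Len g (g (s0 - x)) (g (s0 + y)) / dist (g (s0 - x)) (g (s0 + y))"
proof -
  obtain hp where hp: "hp > 0" "\<forall>t. 0 < t \<and> t < hp \<longrightarrow> norm (sgn (g (s0+t) - g s0) - Tp s0) < eta"
    using Tp(2) eta by blast
  obtain hm where hm: "hm > 0" "\<forall>t. 0 < t \<and> t < hm \<longrightarrow> norm (sgn (g s0 - g (s0-t)) - Tm s0) < eta"
    using Tm(2) eta by blast
  define r where "r = g s0"
  define M where "M = g (s0 + 1/2)"
  define m where "m = dist M r"
  have m: "m > 0" using g_inj_ne[of "s0 + 1/2" s0] by (simp add: m_def M_def r_def)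
  define del where "del = min (min hp hm) (1/2) / 2"
  have del: "0 < del" "del < hp" "del < hm" "del \<le> 1/4" using hp hm by (auto simp: del_def)
  define A where "A = dist (g (s0 + del)) r"
  have A: "A > 0" using g_inj_ne[of "s0 + del" s0] del by (simp add: A_def r_def)
  have mA: "min A (m/2) > 0" using A m by simp
  obtain rho where rho: "rho > 0" "\<forall>t. dist t s0 < rho \<longrightarrow> dist (g t) r < min A (m/2)"
    using isCont_g[of s0, unfolded continuous_at_eps_delta, rule_format, OF mA] unfolding r_def by blast
  define x where "x = min (rho/2) del"
  have x: "0 < x" "x \<le> del" "x < rho" using rho del by (auto simp: x_def)
  define a where "a = dist (g (s0 - x)) r"
  have aA: "a < A" "a < m/2" using rho(2)[rule_format, of "s0 - x"] x by (auto simp: a_def dist_real_def)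
  have a0: "a > 0" using g_inj_ne[of "s0 - x" s0] x del by (simp add: a_def r_def)
  have "continuous_on {0..del} (\<lambda>t. g (s0 + t))" by (intro cont_comp continuous_intros)
  then have "continuous_on {0..del} (\<lambda>t. dist (g (s0 + t)) r)"
    by (intro continuous_intros)
  have "\<exists>y. 0 \<le> y \<and> y \<le> del \<and> dist (g (s0 + y)) r = a"
  proof (rule IVT')
    show "dist (g (s0 + 0)) r \<le> a" using a0 by (simp add: r_def)
    show "a \<le> dist (g (s0 + del)) r" using aA by (simp add: A_def)
  qed (use del \<open>continuous_on {0..del} (\<lambda>t. dist (g (s0 + t)) r)\<close> in auto)
  then obtain y where y: "0 \<le> y" "y \<le> del" "dist (g (s0 + y)) r = a" by blast
  have y0: "y > 0"
  proof (rule ccontr)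
    assume "\<not> y > 0"
    then have "y = 0" using y(1) by simp
    then have "a = 0" using y(3) by (simp add: r_def)
    then show False using a0 by simp
  qed
  define p where "p = g (s0 - x)"
  define q where "q = g (s0 + y)"
  define um where "um = sgn (r - p)"
  define up where "up = sgn (q - r)"
  have um: "norm (um - Tm s0) < eta" using hm(2) x del by (simp add: um_def r_def p_def)
  have up: "norm (up - Tp s0) < eta" using hp(2) y0 y del by (simp add: up_def r_def q_def)
  have rp: "r - p = a *\<^sub>R um" unfolding um_def a_def p_def
    by (simp add: norm_scale_sgn dist_norm norm_minus_commute)
  have qr: "q - r = a *\<^sub>R up" unfolding up_def using y(3) norm_scale_sgn[of "q - r"]
    by (simp add: q_def dist_norm)
  have qp: "q - p = a *\<^sub>R (up + um)" using rp qr by (simp add: algebra_simps)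
  have "norm (up + um) \<le> norm (Tm s0 + Tp s0) + 2 * eta"
  proof -
    have "up + um = (Tm s0 + Tp s0) + (up - Tp s0) + (um - Tm s0)" by (simp add: algebra_simps)
    moreover have "norm ((Tm s0 + Tp s0) + (up - Tp s0) + (um - Tm s0)) \<le> norm ((Tm s0 + Tp s0) + (up - Tp s0)) + norm (um - Tm s0)"
      by (rule norm_triangle_ineq)
    moreover have "norm ((Tm s0 + Tp s0) + (up - Tp s0)) \<le> norm (Tm s0 + Tp s0) + norm (up - Tp s0)"
      by (rule norm_triangle_ineq)
    ultimately have "norm (up + um) \<le> norm (Tm s0 + Tp s0) + norm (up - Tp s0) + norm (um - Tm s0)"
      by simp
    then show ?thesis using um up by simp
  qed
  moreover have "dist p q = a * norm (up + um)"
    using qp a0 by (simp add: dist_norm norm_minus_commute[of p q])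
  ultimately have dpq: "dist p q \<le> a * (norm (Tm s0 + Tp s0) + 2 * eta)"
    using a0 by (simp add: mult_left_mono)
  have pq: "p \<noteq> q" using g_inj_lt[of "s0 - x" "s0 + y"] x y0 y del by (simp add: p_def q_def)
  have Len: "2 * a \<le> Len g p q"
  proof -
    have sr: "s0 - x \<le> s0 + y" "s0 + y \<le> (s0 - x) + 1" using x y0 y del by auto
    have "Len g p q = min (arc_len g (s0 - x) (s0 + y)) (arc_len g (s0 + y) (s0 - x + 1))"
      unfolding p_def q_def by (rule Len_rep[OF sr])
    moreover have "2 * a \<le> arc_len g (s0 - x) (s0 + y)"
    proof -
      have "dist (g (s0 - x)) (g s0) + dist (g s0) (g (s0 + y)) \<le> arc_len g (s0 - x) (s0 + y)"
        by (rule arc_ge3) (use x y in auto)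
      then show ?thesis using y(3) by (simp add: a_def r_def dist_commute)
    qed
    moreover have "2 * a \<le> arc_len g (s0 + y) (s0 - x + 1)"
    proof -
      have "dist (g (s0 + y)) M + dist M (g (s0 - x + 1)) \<le> arc_len g (s0 + y) (s0 - x + 1)"
        unfolding M_def by (rule arc_ge3) (use x y del in auto)
      moreover have "g (s0 - x + 1) = p" by (simp add: p_def per1)
      moreover have "m \<le> dist M q + a" using dist_triangle[of M r q] y(3) by (simp add: m_def q_def dist_commute)
      moreover have "m \<le> dist M p + a" using dist_triangle[of M r p] by (simp add: m_def a_def p_def dist_commute)
      ultimately show ?thesis using aA by (simp add: q_def dist_commute)
    qed
    ultimately show ?thesis by simp
  qed
  have dpos: "dist p q > 0" using pq by simp
  have N: "norm (Tm s0 + Tp s0) + 2 * eta > 0" using eta by (simp add: add_nonneg_pos)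
  have "2 / (norm (Tm s0 + Tp s0) + 2 * eta) = 2 * a / (a * (norm (Tm s0 + Tp s0) + 2 * eta))"
    using a0 by simp
  also have "\<dots> \<le> 2 * a / dist p q"
    by (rule divide_left_mono) (use a0 dpq dpos N in auto)
  also have "\<dots> \<le> Len g p q / dist p q" using Len dpos by (simp add: divide_right_mono)
  finally show ?thesis using pq x y0 by (auto simp: p_def q_def)
qed

lemma le_distortion: "p \<noteq> q \<Longrightarrow> delta g (g x) (g y) \<le> distortion g" if "p = g x" "q = g y" for p q x y
proof -
  assume "p \<noteq> q"
  have "(g x, g y) \<in> {(p, q). p \<in> curve_set g \<and> q \<in> curve_set g \<and> p \<noteq> q}"
    using \<open>p \<noteq> q\<close> that curve_set_range by auto
  then show ?thesis unfolding distortion_def by (rule SUP_upper2) simp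
qed

lemma diag_le_distortion:
  assumes s: "s0 \<in> {0..<1}"
  shows "delta g (g s0) (g s0) \<le> distortion g"
proof -
  have lb: "ereal (2 / (norm (Tm s0 + Tp s0) + 2 * eta)) \<le> distortion g" if eta: "eta > 0" for eta
  proof -
    obtain x y where xy: "g (s0 - x) \<noteq> g (s0 + y)"
      "2 / (norm (Tm s0 + Tp s0) + 2 * eta) \<le> Len g (g (s0 - x)) (g (s0 + y)) / dist (g (s0 - x)) (g (s0 + y))"
      using D1_pair[OF eta, of s0] by blast
    have "ereal (2 / (norm (Tm s0 + Tp s0) + 2 * eta)) \<le> delta g (g (s0 - x)) (g (s0 + y))"
      using xy by (simp add: delta_offdiag)
    also have "\<dots> \<le> distortion g" using le_distortion[OF refl refl xy(1)] .
    finally show ?thesis .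
  qed
  show ?thesis
  proof (cases "ca s0 = 0")
    case True
    have N: "norm (Tm s0 + Tp s0) = 0" using angle_facts(7)[of s0] True by simp
    have "distortion g = \<infinity>"
    proof (rule ereal_top)
      fix B :: real
      define eta where "eta = 1 / (\<bar>B\<bar> + 1)"
      have eta: "eta > 0" by (simp add: eta_def add_pos_nonneg)
      have "2 / (norm (Tm s0 + Tp s0) + 2 * eta) = \<bar>B\<bar> + 1" using N by (simp add: eta_def)
      then have "ereal B \<le> ereal (2 / (norm (Tm s0 + Tp s0) + 2 * eta))" by simp
      also have "\<dots> \<le> distortion g" by (rule lb[OF eta])
      finally show "ereal B \<le> distortion g" .
    qed
    then show ?thesis by simp
  next
    case False
    have c0: "ca s0 > 0" using False angle_facts(4)[of s0] by simp
    have N: "norm (Tm s0 + Tp s0) = 2 * ca s0" by (rule angle_facts(7))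
    have lb': "ereal (1 / (ca s0 + eta)) \<le> distortion g" if "eta > 0" for eta
    proof -
      have "norm (Tm s0 + Tp s0) + 2 * eta = 2 * (ca s0 + eta)" using N by (simp add: algebra_simps)
      then have "2 / (norm (Tm s0 + Tp s0) + 2 * eta) = 2 / (2 * (ca s0 + eta))" by (simp only:)
      also have "\<dots> = 1 / (ca s0 + eta)" using divide_cancel_left[of 2] by (metis mult_divide_mult_cancel_left_if zero_neq_numeral mult_1_right)
      finally have "2 / (norm (Tm s0 + Tp s0) + 2 * eta) = 1 / (ca s0 + eta)" .
      then show ?thesis using lb[OF that] by simp
    qed
    have "ereal (1 / ca s0) \<le> distortion g"
    proof (rule ccontr)
      assume "\<not> ereal (1 / ca s0) \<le> distortion g"
      then have lt: "distortion g < ereal (1 / ca s0)" by simp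
      have l1: "ereal (1 / (ca s0 + 1)) \<le> distortion g" using lb'[of 1] by simp
      then obtain d where d: "distortion g = ereal d"
        using lt by (cases "distortion g") auto
      have d0: "d > 0" using l1 d c0 by (simp add: order_less_le_trans[of 0 "1 / (ca s0 + 1)"])
      have dl: "d < 1 / ca s0" using lt d by simp
      then have "ca s0 < 1 / d" using c0 d0 by (simp add: field_simps)
      define eta where "eta = (1 / d - ca s0) / 2"
      have eta: "eta > 0" using \<open>ca s0 < 1 / d\<close> unfolding eta_def by argo
      have "ca s0 + eta < 1 / d" using \<open>ca s0 < 1 / d\<close> unfolding eta_def by argo
      then have "d < 1 / (ca s0 + eta)" using d0 c0 eta by (simp add: field_simps)
      moreover have "1 / (ca s0 + eta) \<le> d" using lb'[OF eta] d by simp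
      ultimately show False by simp
    qed
    then show ?thesis using delta_diag[OF s] False by simp
  qed
qed

end

lemma ratio_bound: fixes L d k :: real shows "0 < d \<Longrightarrow> 0 < k \<Longrightarrow> k * L \<le> d \<Longrightarrow> L / d \<le> 1 / k"
  by (simp add: field_simps mult.commute)

lemma frac_cancel: fixes X Y Z :: real shows "X \<noteq> 0 \<Longrightarrow> (X / Z) / (X * Y) = 1 / (Z * Y)"
  by (simp add: divide_divide_eq_left mult.commute mult.left_commute)

context sccurve
begin

lemma D2_param:
  assumes c0: "ca s0 > 0" and c: "1 / ca s0 < c"
  shows "\<exists>h>0. \<forall>x y. x < y \<longrightarrow> \<bar>x\<bar> < h \<longrightarrow> \<bar>y\<bar> < h \<longrightarrow>
           Len g (g (s0 + x)) (g (s0 + y)) / dist (g (s0 + x)) (g (s0 + y)) \<le> c"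
proof -
  define ka where "ka = ca s0"
  have ka: "0 < ka" "ka \<le> 1" using c0 angle_facts(6)[of s0] by (simp_all add: ka_def)
  have cpos: "c > 0" using c c0 by (metis less_trans zero_less_divide_1_iff)
  define be where "be = 1 / c"
  have be: "0 < be" "be < ka" using c cpos ka by (simp_all add: be_def ka_def field_simps)
  define eta where "eta = (ka - be) / 2"
  have eta: "eta > 0" using be unfolding eta_def by argo
  define th where "th = min (1/2) ((ka - be) / (ka + be))"
  have thp: "0 < (ka - be) / (ka + be)" using be by (intro divide_pos_pos) auto
  have th2: "th \<le> 1/2" unfolding th_def by (rule min.cobounded1)
  have th3: "th \<le> (ka - be) / (ka + be)" unfolding th_def by (rule min.cobounded2)
  have th1': "0 < th" unfolding th_def using thp by simp
  note th = th1' th2 th3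
  have kbp: "ka + be > 0" using be by simp
  have f1: "2 * be / (ka + be) \<le> 1 - th"
  proof -
    have "1 - (ka - be) / (ka + be) = 2 * be / (ka + be)" using kbp by (simp add: field_simps)
    then show ?thesis using th(3) by linarith
  qed
  have ke: "ka - eta = (ka + be) / 2" unfolding eta_def by argo
  have b1: "be \<le> (1 - th) * (ka - eta)"
  proof -
    have "be = (2 * be / (ka + be)) * ((ka + be) / 2)" using kbp by (simp add: field_simps)
    also have "\<dots> \<le> (1 - th) * ((ka + be) / 2)" using f1 kbp by (intro mult_right_mono) auto
    finally have "be \<le> (1 - th) * ((ka + be) / 2)" .
    then show ?thesis by (simp only: ke)
  qed
  have b2: "be \<le> 1 - th"
  proof -
    have "be * (ka + be) \<le> be * 2" using be ka by (intro mult_left_mono) auto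
    then have "be \<le> 2 * be / (ka + be)" using kbp by (simp add: field_simps)
    then show ?thesis using f1 by linarith
  qed
  have kae: "0 < ka - eta" using ke kbp by simp
  obtain hR where hR: "hR > 0" "\<forall>xs. sorted_wrt (<) xs \<and> set xs \<subseteq> {s0..s0+hR} \<longrightarrow> pturn (map g xs) \<le> th"
    using LSR_all[of s0] th(1) unfolding LSR_def by blast
  obtain hL where hL: "hL > 0" "\<forall>xs. sorted_wrt (<) xs \<and> set xs \<subseteq> {s0-hL..s0} \<longrightarrow> pturn (map g xs) \<le> th"
    using LSL_all[of s0] th(1) unfolding LSL_def by blast
  obtain hp where hp: "hp > 0" "\<forall>t. 0 < t \<and> t < hp \<longrightarrow> norm (sgn (g (s0+t) - g s0) - Tp s0) < eta"
    using Tp(2) eta by blast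
  obtain hm where hm: "hm > 0" "\<forall>t. 0 < t \<and> t < hm \<longrightarrow> norm (sgn (g s0 - g (s0-t)) - Tm s0) < eta"
    using Tm(2) eta by blast
  define h where "h = min (min (min hR hL) (min hp hm)) (1/4)"
  have h: "h > 0" "h \<le> hR" "h \<le> hL" "h \<le> hp" "h \<le> hm" "h \<le> 1/4"
    using hR hL hp hm by (auto simp: h_def)
  have th1: "th < 1" using th by simp
  have main: "Len g (g (s0 + x)) (g (s0 + y)) / dist (g (s0 + x)) (g (s0 + y)) \<le> c"
    if xy: "x < y" "\<bar>x\<bar> < h" "\<bar>y\<bar> < h" for x y
  proof -
    define p where "p = g (s0 + x)"
    define q where "q = g (s0 + y)"
    define r where "r = g s0"
    have st: "s0 + x \<le> s0 + y" "s0 + y \<le> s0 + x + 1" using xy h by auto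
    have pq: "p \<noteq> q" using g_inj_lt[of "s0 + x" "s0 + y"] xy h by (simp add: p_def q_def)
    have D: "dist p q > 0" using pq by simp
    have Lle: "Len g p q \<le> arc_len g (s0 + x) (s0 + y)"
      unfolding p_def q_def Len_rep[OF st] by simp
    have cge1: "1 / (1 - th) \<le> c"
    proof -
      have "1 / (1 - th) \<le> 1 / be" using b2 be by (intro divide_left_mono) auto
      then show ?thesis by (simp add: be_def)
    qed
    consider "0 \<le> x" | "y \<le> 0" | "x < 0" "0 < y" by linarith
    then show ?thesis
    proof cases
      case 1
      have "(1 - th) * arc_len g (s0 + x) (s0 + y) \<le> dist (g (s0 + x)) (g (s0 + y))"
        by (rule arc_straight[OF th1 hR(2)]) (use 1 xy h in auto)
      moreover have "(1 - th) * Len g p q \<le> (1 - th) * arc_len g (s0 + x) (s0 + y)"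
        using Lle th1 by (intro mult_left_mono) auto
      ultimately have "(1 - th) * Len g p q \<le> dist p q" by (simp add: p_def q_def)
      then have "Len g p q / dist p q \<le> 1 / (1 - th)" using D th1 by (intro ratio_bound) auto
      then show ?thesis using cge1 by (simp add: p_def q_def)
    next
      case 2
      have "(1 - th) * arc_len g (s0 + x) (s0 + y) \<le> dist (g (s0 + x)) (g (s0 + y))"
        by (rule arc_straight[OF th1 hL(2)]) (use 2 xy h in auto)
      moreover have "(1 - th) * Len g p q \<le> (1 - th) * arc_len g (s0 + x) (s0 + y)"
        using Lle th1 by (intro mult_left_mono) auto
      ultimately have "(1 - th) * Len g p q \<le> dist p q" by (simp add: p_def q_def)
      then have "Len g p q / dist p q \<le> 1 / (1 - th)" using D th1 by (intro ratio_bound) auto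
      then show ?thesis using cge1 by (simp add: p_def q_def)
    next
      case 3
      define A where "A = dist p r"
      define B where "B = dist r q"
      have A0: "A > 0" using g_inj_ne[of "s0 + x" s0] 3 xy h by (simp add: A_def p_def r_def)
      have B0: "B \<ge> 0" by (simp add: B_def)
      have a1: "arc_len g (s0 + x) (s0 + y) \<le> arc_len g (s0 + x) s0 + arc_len g s0 (s0 + y)"
        by (rule arc_split) (use 3 in auto)
      have a2: "(1 - th) * arc_len g (s0 + x) s0 \<le> A"
        unfolding A_def p_def r_def by (rule arc_straight[OF th1 hL(2)]) (use 3 xy h in auto)
      have a3: "(1 - th) * arc_len g s0 (s0 + y) \<le> B"
        unfolding B_def q_def r_def by (rule arc_straight[OF th1 hR(2)]) (use 3 xy h in auto)
      have LAB: "(1 - th) * Len g p q \<le> A + B"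
      proof -
        have "(1 - th) * Len g p q \<le> (1 - th) * arc_len g (s0 + x) (s0 + y)"
          using Lle th1 by (intro mult_left_mono) auto
        also have "\<dots> \<le> (1 - th) * arc_len g (s0 + x) s0 + (1 - th) * arc_len g s0 (s0 + y)"
          using a1 th1 by (simp add: distrib_left[symmetric] mult_left_mono)
        finally show ?thesis using a2 a3 by linarith
      qed
      define um where "um = sgn (r - p)"
      define up where "up = sgn (q - r)"
      have um: "norm (um - Tm s0) < eta"
        using hm(2)[rule_format, of "-x"] 3 xy h by (simp add: um_def r_def p_def)
      have up: "norm (up - Tp s0) < eta"
        using hp(2)[rule_format, of y] 3 xy h by (simp add: up_def r_def q_def)
      have rp: "r - p = A *\<^sub>R um" unfolding um_def A_def
        using norm_scale_sgn[of "r - p"] by (simp add: dist_norm norm_minus_commute)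
      have qr: "q - r = B *\<^sub>R up" unfolding up_def B_def
        using norm_scale_sgn[of "q - r"] by (simp add: dist_norm norm_minus_commute)
      have qp: "q - p = (A *\<^sub>R Tm s0 + B *\<^sub>R Tp s0) + (A *\<^sub>R (um - Tm s0) + B *\<^sub>R (up - Tp s0))"
        using rp qr by (simp add: algebra_simps)
      have cb: "(A + B) * ka \<le> norm (A *\<^sub>R Tm s0 + B *\<^sub>R Tp s0)"
        unfolding ka_def by (rule cone_bound[OF Tm(1) Tp(1)]) (use A0 B0 angle_facts(4,5)[of s0] in \<open>auto simp: kk_def\<close>)
      have err: "norm (A *\<^sub>R (um - Tm s0) + B *\<^sub>R (up - Tp s0)) \<le> (A + B) * eta"
      proof -
        have "norm (A *\<^sub>R (um - Tm s0) + B *\<^sub>R (up - Tp s0)) \<le> norm (A *\<^sub>R (um - Tm s0)) + norm (B *\<^sub>R (up - Tp s0))"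
          by (rule norm_triangle_ineq)
        also have "\<dots> = A * norm (um - Tm s0) + B * norm (up - Tp s0)" using A0 B0 by simp
        also have "\<dots> \<le> A * eta + B * eta"
          using um up A0 B0 by (intro add_mono mult_left_mono) auto
        finally show ?thesis by (simp add: algebra_simps)
      qed
      have "norm (A *\<^sub>R Tm s0 + B *\<^sub>R Tp s0) \<le> norm (q - p) + norm (A *\<^sub>R (um - Tm s0) + B *\<^sub>R (up - Tp s0))"
      proof -
        define V where "V = A *\<^sub>R Tm s0 + B *\<^sub>R Tp s0"
        define E where "E = A *\<^sub>R (um - Tm s0) + B *\<^sub>R (up - Tp s0)"
        have "norm V \<le> norm (V + E) + norm E" using norm_triangle_ineq4[of "V + E" E] by simp
        then show ?thesis using qp unfolding V_def E_def by simp
      qed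
      then have Dge: "(A + B) * (ka - eta) \<le> dist p q"
        using cb err by (simp add: dist_norm norm_minus_commute algebra_simps)
      have ABp: "A + B > 0" using A0 B0 by simp
      have "Len g p q / dist p q \<le> ((A + B) / (1 - th)) / ((A + B) * (ka - eta))"
      proof (rule frac_le)
        show "0 \<le> (A + B) / (1 - th)" using ABp th1 by simp
        show "Len g p q \<le> (A + B) / (1 - th)" using LAB th1 by (simp add: field_simps)
        show "0 < (A + B) * (ka - eta)" using ABp kae by simp
        show "(A + B) * (ka - eta) \<le> dist p q" by (rule Dge)
      qed
      also have "\<dots> = 1 / ((1 - th) * (ka - eta))" using ABp by (intro frac_cancel) simp
      also have "\<dots> \<le> 1 / be" using b1 be by (intro divide_left_mono) auto
      finally show ?thesis by (simp add: be_def p_def q_def)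
    qed
  qed
  then show ?thesis using h(1) by blast
qed

lemma D2:
  assumes s: "s0 \<in> {0..<1}" and lt: "delta g (g s0) (g s0) < ereal c"
  shows "\<exists>rho>0. \<forall>p' q'. p' \<in> curve_set g \<longrightarrow> q' \<in> curve_set g \<longrightarrow> p' \<noteq> q' \<longrightarrow>
            dist p' (g s0) < rho \<longrightarrow> dist q' (g s0) < rho \<longrightarrow> delta g p' q' \<le> ereal c"
proof -
  have c0: "ca s0 \<noteq> 0" using lt delta_diag[OF s] by auto
  then have c0': "ca s0 > 0" using angle_facts(4)[of s0] by simp
  have c: "1 / ca s0 < c" using lt delta_diag[OF s] c0 by simp
  obtain h where h: "h > 0" "\<forall>x y. x < y \<longrightarrow> \<bar>x\<bar> < h \<longrightarrow> \<bar>y\<bar> < h \<longrightarrow>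
           Len g (g (s0 + x)) (g (s0 + y)) / dist (g (s0 + x)) (g (s0 + y)) \<le> c"
    using D2_param[OF c0' c] by blast
  obtain rho where rho: "rho > 0" "\<forall>sig. dist (g sig) (g s0) < rho \<longrightarrow> (\<exists>k::int. \<bar>sig - real_of_int k - s0\<bar> < h)"
    using param_near[OF h(1), of s0] by blast
  have rep: "\<exists>x. \<bar>x\<bar> < h \<and> p' = g (s0 + x)" if pin: "p' \<in> curve_set g" and pd: "dist p' (g s0) < rho" for p'
  proof -
    have "p' \<in> range g" using pin curve_set_range by simp
    then obtain sig where sig: "p' = g sig" by blast
    then obtain k :: int where k: "\<bar>sig - real_of_int k - s0\<bar> < h" using rho(2) pd by blast
    have "g (s0 + (sig - real_of_int k - s0)) = p'" using per_int'[of sig k] sig by simp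
    then show ?thesis using k by metis
  qed
  have "delta g p' q' \<le> ereal c"
    if pq: "p' \<in> curve_set g" "q' \<in> curve_set g" "p' \<noteq> q'" "dist p' (g s0) < rho" "dist q' (g s0) < rho" for p' q'
  proof -
    obtain x where x: "\<bar>x\<bar> < h" "p' = g (s0 + x)" using rep pq by blast
    obtain y where y: "\<bar>y\<bar> < h" "q' = g (s0 + y)" using rep pq by blast
    have "x \<noteq> y" using pq x y by auto
    then consider "x < y" | "y < x" by linarith
    then have "Len g p' q' / dist p' q' \<le> c"
    proof cases
      case 1 then show ?thesis using h(2) x y by blast
    next
      case 2
      then have "Len g q' p' / dist q' p' \<le> c" using h(2) x y by blast
      then show ?thesis by (simp add: Len_sym dist_commute)
    qed
    then show ?thesis using pq(3) by (simp add: delta_offdiag)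
  qed
  then show ?thesis using rho(1) by blast
qed

end

context sccurve
begin

lemma curve_param: "p \<in> curve_set g \<Longrightarrow> param g p \<in> {0..<1} \<and> g (param g p) = p"
proof -
  assume "p \<in> curve_set g"
  then obtain s where s: "s \<in> {0..<1}" "p = g s" by (auto simp: curve_set_def)
  then show ?thesis using param_01[OF s(1)] by simp
qed

lemma curve_rep:
  assumes h: "h > 0"
  shows "\<exists>rho>0. \<forall>p'. p' \<in> curve_set g \<longrightarrow> dist p' (g s0) < rho \<longrightarrow> (\<exists>x. \<bar>x\<bar> < h \<and> p' = g (s0 + x))"
proof -
  obtain rho where rho: "rho > 0" "\<forall>sig. dist (g sig) (g s0) < rho \<longrightarrow> (\<exists>k::int. \<bar>sig - real_of_int k - s0\<bar> < h)"
    using param_near[OF h, of s0] by blast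
  have "\<exists>x. \<bar>x\<bar> < h \<and> p' = g (s0 + x)" if pin: "p' \<in> curve_set g" and pd: "dist p' (g s0) < rho" for p'
  proof -
    have "p' \<in> range g" using pin curve_set_range by simp
    then obtain sig where sig: "p' = g sig" by blast
    then obtain k :: int where k: "\<bar>sig - real_of_int k - s0\<bar> < h" using rho(2) pd by blast
    have "g (s0 + (sig - real_of_int k - s0)) = p'" using per_int'[of sig k] sig by simp
    then show ?thesis using k by metis
  qed
  then show ?thesis using rho(1) by blast
qed

lemma usc_off:
  assumes st: "sig < tau" "tau < sig + 1"
    and c: "Len g (g sig) (g tau) / dist (g sig) (g tau) < c"
  shows "\<exists>rho>0. \<forall>p' q'. p' \<in> curve_set g \<longrightarrow> q' \<in> curve_set g \<longrightarrow> p' \<noteq> q' \<longrightarrow>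
           dist p' (g sig) < rho \<longrightarrow> dist q' (g tau) < rho \<longrightarrow> Len g p' q' / dist p' q' \<le> c"
proof -
  define L0 where "L0 = Len g (g sig) (g tau)"
  define d0 where "d0 = dist (g sig) (g tau)"
  have L0: "L0 = min (arc_len g sig tau) (arc_len g tau (sig + 1))"
    unfolding L0_def by (rule Len_rep) (use st in auto)
  have L0pos: "0 \<le> L0" unfolding L0 using arc_nonneg st by simp
  have d0: "d0 > 0" using g_inj_lt[OF st] by (simp add: d0_def)
  have "L0 < c * d0" using c d0 by (simp add: L0_def d0_def pos_divide_less_eq)
  define ga where "ga = c * d0 - L0"
  have ga: "ga > 0" using \<open>L0 < c * d0\<close> by (simp add: ga_def)
  have cpos: "c > 0"
  proof -
    have "0 < c * d0" using \<open>L0 < c * d0\<close> L0pos by linarith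
    then show ?thesis using d0 by (simp add: zero_less_mult_iff)
  qed
  define ep where "ep = ga / 2"
  define rho0 where "rho0 = min (d0 / 4) (ga / (4 * c))"
  have rho0: "0 < rho0" "rho0 \<le> d0 / 4" "rho0 \<le> ga / (4 * c)"
    using d0 ga cpos by (auto simp: rho0_def)
  have ep2: "ep / 2 > 0" using ga by (simp add: ep_def)
  obtain hs where hs: "hs > 0" "\<forall>h'. 0 < h' \<and> h' \<le> hs \<longrightarrow> arc_len g sig (sig + h') \<le> ep / 2 \<and> arc_len g (sig - h') sig \<le> ep / 2"
    using arc_small[OF ep2, of sig] by blast
  obtain ht where ht: "ht > 0" "\<forall>h'. 0 < h' \<and> h' \<le> ht \<longrightarrow> arc_len g tau (tau + h') \<le> ep / 2 \<and> arc_len g (tau - h') tau \<le> ep / 2"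
    using arc_small[OF ep2, of tau] by blast
  define h where "h = min (min hs ht) (min ((tau - sig) / 4) ((sig + 1 - tau) / 4))"
  have hA: "h \<le> min hs ht" unfolding h_def by (rule min.cobounded1)
  have hB: "h \<le> min ((tau - sig) / 4) ((sig + 1 - tau) / 4)" unfolding h_def by (rule min.cobounded2)
  have p1: "0 < (tau - sig) / 4" "0 < (sig + 1 - tau) / 4" using st by simp_all
  have h0: "0 < h" unfolding h_def using hs(1) ht(1) p1 by simp
  have h: "0 < h" "h \<le> hs" "h \<le> ht" "h \<le> (tau - sig) / 4" "h \<le> (sig + 1 - tau) / 4"
    using h0 hA hB by auto
  obtain rho1 where rho1: "rho1 > 0" "\<forall>p'. p' \<in> curve_set g \<longrightarrow> dist p' (g sig) < rho1 \<longrightarrow> (\<exists>x. \<bar>x\<bar> < h \<and> p' = g (sig + x))"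
    using curve_rep[OF h(1), of sig] by blast
  obtain rho2 where rho2: "rho2 > 0" "\<forall>p'. p' \<in> curve_set g \<longrightarrow> dist p' (g tau) < rho2 \<longrightarrow> (\<exists>x. \<bar>x\<bar> < h \<and> p' = g (tau + x))"
    using curve_rep[OF h(1), of tau] by blast
  define rho where "rho = min rho0 (min rho1 rho2)"
  have rho: "0 < rho" "rho \<le> rho0" "rho \<le> rho1" "rho \<le> rho2" using rho0 rho1 rho2 by (auto simp: rho_def)
  have "Len g p' q' / dist p' q' \<le> c"
    if pq: "p' \<in> curve_set g" "q' \<in> curve_set g" "p' \<noteq> q'" "dist p' (g sig) < rho" "dist q' (g tau) < rho" for p' q'
  proof -
    obtain x where x: "\<bar>x\<bar> < h" "p' = g (sig + x)" using rho1(2) pq(1,4) rho by force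
    obtain y where y: "\<bar>y\<bar> < h" "q' = g (tau + y)" using rho2(2) pq(2,5) rho by force
    have o1: "sig - h \<le> sig + x" "sig + x \<le> tau + y" "tau + y \<le> tau + h" "tau - h \<le> tau + y"
      "tau + y \<le> sig + x + 1" "sig + x + 1 \<le> sig + 1 + h" using x(1) y(1) h st by (auto simp: abs_less_iff)
    have Lr: "Len g p' q' = min (arc_len g (sig + x) (tau + y)) (arc_len g (tau + y) (sig + x + 1))"
      unfolding x(2) y(2) by (rule Len_rep) (use o1 in auto)
    have hh: "arc_len g sig (sig + h) \<le> ep / 2" "arc_len g (sig - h) sig \<le> ep / 2"
      "arc_len g tau (tau + h) \<le> ep / 2" "arc_len g (tau - h) tau \<le> ep / 2"
      using hs(2) ht(2) h by auto
    have B1: "arc_len g (sig + x) (tau + y) \<le> arc_len g sig tau + ep"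
    proof -
      have "arc_len g (sig + x) (tau + y) \<le> arc_len g (sig - h) (tau + h)"
        by (rule arc_mono) (use o1 in auto)
      also have "\<dots> \<le> arc_len g (sig - h) sig + arc_len g sig (tau + h)"
        by (rule arc_split) (use h st in auto)
      also have "arc_len g sig (tau + h) \<le> arc_len g sig tau + arc_len g tau (tau + h)"
        by (rule arc_split) (use h st in auto)
      finally show ?thesis using hh by (simp add: ep_def)
    qed
    have B2: "arc_len g (tau + y) (sig + x + 1) \<le> arc_len g tau (sig + 1) + ep"
    proof -
      have "arc_len g (tau + y) (sig + x + 1) \<le> arc_len g (tau - h) (sig + 1 + h)"
        by (rule arc_mono) (use o1 in auto)
      also have "\<dots> \<le> arc_len g (tau - h) tau + arc_len g tau (sig + 1 + h)"
        by (rule arc_split) (use h st in auto)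
      also have "arc_len g tau (sig + 1 + h) \<le> arc_len g tau (sig + 1) + arc_len g (sig + 1) (sig + 1 + h)"
        by (rule arc_split) (use h st in auto)
      also have "arc_len g (sig + 1) (sig + 1 + h) = arc_len g sig (sig + h)"
        using arc_shift[of sig 1 "sig + h"] by (simp add: add.commute add.left_commute)
      finally show ?thesis using hh by (simp add: ep_def)
    qed
    have Lb: "Len g p' q' \<le> L0 + ep" unfolding Lr L0 using B1 B2 by linarith
    have dd: "d0 - 2 * rho0 < dist p' q'"
    proof -
      have "d0 \<le> dist (g sig) p' + dist p' q' + dist q' (g tau)"
        unfolding d0_def by (metis dist_triangle order_trans add_right_mono dist_triangle2)
      then show ?thesis using pq(4,5) rho by (simp add: dist_commute)
    qed
    have dpos: "0 < d0 - 2 * rho0" using rho0 d0 by linarith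
    have dp: "0 < dist p' q'" using pq(3) by simp
    have key: "L0 + ep \<le> c * (d0 - 2 * rho0)"
    proof -
      have "2 * c * rho0 \<le> 2 * c * (ga / (4 * c))" using rho0 cpos by (intro mult_left_mono) auto
      also have "\<dots> = ga / 2" using cpos by simp
      finally have "2 * c * rho0 \<le> ga / 2" .
      moreover have "c * (d0 - 2 * rho0) = c * d0 - 2 * (c * rho0)" by (simp add: algebra_simps)
      ultimately show ?thesis unfolding ep_def ga_def by argo
    qed
    have "Len g p' q' / dist p' q' \<le> (L0 + ep) / dist p' q'" using Lb dp by (simp add: divide_right_mono)
    also have "\<dots> \<le> (L0 + ep) / (d0 - 2 * rho0)"
      using L0pos ga dpos dd dp by (intro divide_left_mono) (auto simp: ep_def)
    also have "\<dots> \<le> c" using key dpos by (simp add: pos_divide_le_eq mult.commute)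
    finally show ?thesis .
  qed
  then show ?thesis using rho(1) by blast
qed

lemma usc:
  assumes p: "p \<in> curve_set g" and q: "q \<in> curve_set g" and lt: "delta g p q < ereal c"
  shows "\<exists>rho>0. \<forall>p' q'. p' \<in> curve_set g \<longrightarrow> q' \<in> curve_set g \<longrightarrow> p' \<noteq> q' \<longrightarrow>
           dist p' p < rho \<longrightarrow> dist q' q < rho \<longrightarrow> delta g p' q' \<le> ereal c"
proof -
  define sig where "sig = param g p"
  define tau where "tau = param g q"
  have sig: "sig \<in> {0..<1}" "g sig = p" using curve_param[OF p] by (simp_all add: sig_def)
  have tau: "tau \<in> {0..<1}" "g tau = q" using curve_param[OF q] by (simp_all add: tau_def)
  show ?thesis
  proof (cases "p = q")
    case True
    then show ?thesis using D2[OF sig(1)] lt sig(2) by simp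
  next
    case False
    have lt': "Len g p q / dist p q < c" using lt False by (simp add: delta_offdiag)
    have ne: "sig \<noteq> tau" using False sig tau by auto
    consider "sig < tau" | "tau < sig" using ne by linarith
    then show ?thesis
    proof cases
      case 1
      have "tau < sig + 1" using sig tau by auto
      have lt'': "Len g (g sig) (g tau) / dist (g sig) (g tau) < c" using lt' sig(2) tau(2) by simp
      obtain rho where rho0: "rho > 0"
        "\<forall>p' q'. p' \<in> curve_set g \<longrightarrow> q' \<in> curve_set g \<longrightarrow> p' \<noteq> q' \<longrightarrow>
           dist p' (g sig) < rho \<longrightarrow> dist q' (g tau) < rho \<longrightarrow> Len g p' q' / dist p' q' \<le> c"
        using usc_off[OF 1 \<open>tau < sig + 1\<close> lt''] by blast
      note rho = rho0[unfolded sig(2) tau(2)]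
      show ?thesis using rho by (intro exI[of _ rho]) (auto simp: delta_offdiag)
    next
      case 2
      have "sig < tau + 1" using sig tau by auto
      moreover have "Len g q p / dist q p < c" using lt' by (simp add: Len_sym dist_commute)
      moreover have lt'': "Len g (g tau) (g sig) / dist (g tau) (g sig) < c"
        using \<open>Len g q p / dist q p < c\<close> sig(2) tau(2) by simp
      ultimately obtain rho where rho0: "rho > 0"
        "\<forall>p' q'. p' \<in> curve_set g \<longrightarrow> q' \<in> curve_set g \<longrightarrow> p' \<noteq> q' \<longrightarrow>
           dist p' (g tau) < rho \<longrightarrow> dist q' (g sig) < rho \<longrightarrow> Len g p' q' / dist p' q' \<le> c"
        using usc_off[OF 2] by blast
      note rho = rho0[unfolded sig(2) tau(2)]
      have "delta g p' q' \<le> ereal c"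
        if "p' \<in> curve_set g" "q' \<in> curve_set g" "p' \<noteq> q'" "dist p' p < rho" "dist q' q < rho" for p' q'
      proof -
        have "Len g q' p' / dist q' p' \<le> c" using rho(2) that by auto
        then show ?thesis using that(3) by (simp add: delta_offdiag Len_sym dist_commute)
      qed
      then show ?thesis using rho(1) by blast
    qed
  qed
qed

theorem main: "\<exists>p\<in>curve_set g. \<exists>q\<in>curve_set g. distortion g = delta g p q"
proof -
  define C where "C = curve_set g"
  define S where "S = {(p, q). p \<in> C \<and> q \<in> C \<and> p \<noteq> q}"
  define D where "D = distortion g"
  have Ddef: "D = (SUP z\<in>S. (case z of (p, q) \<Rightarrow> delta g p q))"
    unfolding D_def distortion_def S_def C_def by simp
  have upS: "delta g p q \<le> D" if "p \<in> C" "q \<in> C" "p \<noteq> q" for p q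
    unfolding Ddef by (rule SUP_upper2[of "(p, q)"]) (use that in \<open>auto simp: S_def\<close>)
  have diag: "delta g r r \<le> D" if "r \<in> C" for r
    using diag_le_distortion[of "param g r"] curve_param[of r] that by (simp add: C_def D_def)
  have g0: "g 0 \<in> C" "g (1/2) \<in> C" using curve_set_range by (auto simp: C_def)
  have g0ne: "g 0 \<noteq> g (1/2)" using g_inj_lt[of 0 "1/2"] by simp
  have Dnm: "D \<noteq> -\<infinity>"
  proof
    assume "D = -\<infinity>"
    then show False using upS[OF g0 g0ne] g0ne by (simp add: delta_offdiag)
  qed
  define y :: "nat \<Rightarrow> ereal" where "y n = (if D = \<infinity> then ereal (real n) else D - ereal (1 / (real n + 1)))" for n
  have ylt: "y n < D" for n
  proof (cases "D = \<infinity>")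
    case True then show ?thesis by (simp add: y_def)
  next
    case False
    then obtain d where "D = ereal d" using Dnm by (cases D) auto
    then show ?thesis by (simp add: y_def)
  qed
  have "\<exists>z. z \<in> S \<and> y n < delta g (fst z) (snd z)" for n
  proof -
    have "y n < (SUP z\<in>S. (case z of (p, q) \<Rightarrow> delta g p q))" using ylt[of n] Ddef by simp
    then obtain z where "z \<in> S" "y n < (case z of (p, q) \<Rightarrow> delta g p q)" by (auto simp: less_SUP_iff)
    then show ?thesis by (cases z) auto
  qed
  then obtain z where z: "\<And>n. z n \<in> S" "\<And>n. y n < delta g (fst (z n)) (snd (z n))" by metis
  have cC: "compact (C \<times> C)" using compact_curve by (simp add: C_def compact_Times)
  have zC: "\<forall>n. z n \<in> C \<times> C"
  proof
    fix n
    obtain a b where ab: "z n = (a, b)" by (cases "z n")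
    then show "z n \<in> C \<times> C" using z(1)[of n] by (simp add: S_def)
  qed
  obtain l phi where l: "l \<in> C \<times> C" "strict_mono phi" "(z \<circ> phi) \<longlonglongrightarrow> l"
    using cC zC unfolding compact_def by blast
  obtain p q where pq: "l = (p, q)" by (cases l)
  have pC: "p \<in> C" "q \<in> C" using l(1) pq by auto
  have "D \<le> delta g p q"
  proof (rule ccontr)
    assume "\<not> D \<le> delta g p q"
    then have "delta g p q < D" by simp
    then obtain c where c: "delta g p q < ereal c" "ereal c < D" using ereal_dense2 by blast
    obtain rho where rho: "rho > 0" "\<forall>p' q'. p' \<in> C \<longrightarrow> q' \<in> C \<longrightarrow> p' \<noteq> q' \<longrightarrow>
           dist p' p < rho \<longrightarrow> dist q' q < rho \<longrightarrow> delta g p' q' \<le> ereal c"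
      using usc[of p q c] pC c(1) by (auto simp: C_def)
    have t1: "(\<lambda>n. fst (z (phi n))) \<longlonglongrightarrow> p"
      using tendsto_fst[OF l(3)] pq by (simp add: comp_def)
    have t2: "(\<lambda>n. snd (z (phi n))) \<longlonglongrightarrow> q"
      using tendsto_snd[OF l(3)] pq by (simp add: comp_def)
    have ev1: "eventually (\<lambda>n. dist (fst (z (phi n))) p < rho) sequentially"
      using t1[unfolded tendsto_iff, rule_format, OF rho(1)] .
    have ev2: "eventually (\<lambda>n. dist (snd (z (phi n))) q < rho) sequentially"
      using t2[unfolded tendsto_iff, rule_format, OF rho(1)] .
    have "\<exists>N. \<forall>n\<ge>N. ereal c < y n"
    proof (cases "D = \<infinity>")
      case True
      obtain N :: nat where N: "c < real N" using reals_Archimedean2 by blast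
      have "ereal c < y n" if "n \<ge> N" for n
        using that N True by (simp add: y_def)
      then show ?thesis by blast
    next
      case False
      then obtain d where d: "D = ereal d" using Dnm by (cases D) auto
      have cd: "c < d" using c(2) d by simp
      obtain N :: nat where N: "1 / (d - c) < real N" using reals_Archimedean2 by blast
      have "ereal c < y n" if "n \<ge> N" for n
      proof -
        have "1 / (d - c) < real n + 1" using N that by linarith
        moreover have "0 < d - c" "0 < real n + 1" using cd by simp_all
        ultimately have "1 < (real n + 1) * (d - c)" by (simp add: pos_divide_less_eq)
        then have "1 / (real n + 1) < d - c" using \<open>0 < real n + 1\<close> by (simp add: pos_divide_less_eq mult.commute)
        then show ?thesis using d False by (simp add: y_def)
      qed
      then show ?thesis by blast
    qed
    then obtain N where N: "\<forall>n\<ge>N. ereal c < y n" by blast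
    have "\<forall>n\<ge>N. ereal c < y (phi n)"
    proof (intro allI impI)
      fix n assume "N \<le> n"
      then have "N \<le> phi n" using seq_suble[OF l(2), of n] by linarith
      then show "ereal c < y (phi n)" using N by blast
    qed
    then have ev3: "eventually (\<lambda>n. ereal c < y (phi n)) sequentially"
      unfolding eventually_sequentially by blast
    have "eventually (\<lambda>n. dist (fst (z (phi n))) p < rho \<and> dist (snd (z (phi n))) q < rho \<and> ereal c < y (phi n)) sequentially"
      by (rule eventually_conj[OF ev1 eventually_conj[OF ev2 ev3]])
    then obtain N' where N': "\<forall>n\<ge>N'. dist (fst (z (phi n))) p < rho \<and> dist (snd (z (phi n))) q < rho \<and> ereal c < y (phi n)"
      unfolding eventually_sequentially by blast
    define n where "n = N'"
    have n: "dist (fst (z (phi n))) p < rho" "dist (snd (z (phi n))) q < rho" "ereal c < y (phi n)"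
      using N' by (simp_all add: n_def)
    obtain a b where ab: "z (phi n) = (a, b)" by (cases "z (phi n)")
    have zS: "fst (z (phi n)) \<in> C" "snd (z (phi n)) \<in> C" "fst (z (phi n)) \<noteq> snd (z (phi n))"
      using z(1)[of "phi n"] ab by (simp_all add: S_def)
    have "delta g (fst (z (phi n))) (snd (z (phi n))) \<le> ereal c" using rho(2) zS n by blast
    moreover have "y (phi n) < delta g (fst (z (phi n))) (snd (z (phi n)))" by (rule z(2))
    ultimately show False using n(3) by simp
  qed
  moreover have "delta g p q \<le> D" using upS diag pC by (cases "p = q") auto
  ultimately have "D = delta g p q" by simp
  then show ?thesis using pC by (auto simp: C_def D_def)
qed

end

theorem corollary7p3:
  fixes g :: "real \<Rightarrow> 'a::euclidean_space"
  assumes "simple_closed_curve g"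
    and "finite_total_curvature g"
  shows "\<exists>p\<in>curve_set g. \<exists>q\<in>curve_set g. distortion g = delta g p q"
proof -
  interpret sccurve g by unfold_locales (use assms in auto)
  show ?thesis by (rule main)
qed

end
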